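(* Let $\mathcal Z\subseteq\mathcal H$ be a subspace, let $A$ be a $\Delta$-AGSP for $\mathcal Z$ with $\Delta\le 1/2$, and set $\tilde H=I-A^\dagger A$. Let $\delta>0$ and let $\mathcal Y\subseteq\mathcal H$ be $\delta$-viable for $\mathcal Z$. Let $\tilde{\mathcal Z}\subseteq\mathcal Y$ be the support (range) of the spectral projection $\mathbf 1_{[0,\delta]}(\tilde H|_{\mathcal Y})$, regarded as a subspace of $\mathcal H$. Then $\tilde{\mathcal Z}$ and $\mathcal Z$ are $2\delta$-close.
   Context: For a subspace $\mathcal Y\subseteq\mathcal H$, $P_{\mathcal Y}$ is the orthogonal projection onto $\mathcal Y$, and for an operator $X$ on $\mathcal H$, $X|_{\mathcal Y}=\Gamma X\Gamma^\dagger$ is its two-sided restriction, where $\Gamma:\mathcal H\to\mathcal Y$ is the projection onto $\mathcal Y$ and $\Gamma^\dagger$ the inclusion. $\mathcal Y$ is $\delta$-viable for $\mathcal Z$ if $\|P_{\mathcal Y}|z\rangle\|^2\ge1-\delta$ for every unit $|z\rangle\in\mathcal Z$; two subspaces are $\delta$-close if each is $\delta$-viable for the other. A $\Delta$-AGSP for $\mathcal Z$ is an operator $A=I_{\mathcal Z}\oplus A_{\mathcal Z^\perp}$ on $\mathcal H$ with $A_{\mathcal Z^\perp}$ an operator on $\mathcal Z^\perp$ of norm at most $\sqrt\Delta$. *)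

theory Defs
  imports "Jordan_Normal_Form.Schur_Decomposition"
begin

text \<open>The ambient Hilbert space H is C^n, modelled as the vectors of
  carrier_vec n (type complex vec); operators are n x n complex matrices.\<close>

definition vnorm :: "complex vec \<Rightarrow> real" where
  "vnorm v = sqrt (Re (v \<bullet>c v))"

definition is_subspace :: "nat \<Rightarrow> complex vec set \<Rightarrow> bool" where
  "is_subspace n Y \<longleftrightarrow> Y \<subseteq> carrier_vec n \<and> 0\<^sub>v n \<in> Y
     \<and> (\<forall>u\<in>Y. \<forall>v\<in>Y. u + v \<in> Y) \<and> (\<forall>c. \<forall>u\<in>Y. c \<cdot>\<^sub>v u \<in> Y)"

definition orth_compl :: "nat \<Rightarrow> complex vec set \<Rightarrow> complex vec set" where
  "orth_compl n Y = {w \<in> carrier_vec n. \<forall>y\<in>Y. w \<bullet>c y = 0}"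

definition proj :: "complex vec set \<Rightarrow> complex vec \<Rightarrow> complex vec" where
  "proj Y v = (THE p. p \<in> Y \<and> (\<forall>y\<in>Y. (v - p) \<bullet>c y = 0))"

definition vspan :: "nat \<Rightarrow> complex vec set \<Rightarrow> complex vec set" where
  "vspan n S = \<Inter>{W. is_subspace n W \<and> S \<subseteq> W}"

definition viable :: "real \<Rightarrow> complex vec set \<Rightarrow> complex vec set \<Rightarrow> bool" where
  "viable \<delta> Y Z \<longleftrightarrow> (\<forall>z\<in>Z. vnorm z = 1 \<longrightarrow> (vnorm (proj Y z))\<^sup>2 \<ge> 1 - \<delta>)"

definition close :: "real \<Rightarrow> complex vec set \<Rightarrow> complex vec set \<Rightarrow> bool" where
  "close \<delta> Y Z \<longleftrightarrow> viable \<delta> Y Z \<and> viable \<delta> Z Y"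

definition AGSP :: "nat \<Rightarrow> real \<Rightarrow> complex vec set \<Rightarrow> complex mat \<Rightarrow> bool" where
  "AGSP n \<Delta> Z A \<longleftrightarrow> A \<in> carrier_mat n n
     \<and> (\<forall>z\<in>Z. A *\<^sub>v z = z)
     \<and> (\<forall>w\<in>orth_compl n Z. A *\<^sub>v w \<in> orth_compl n Z
                               \<and> vnorm (A *\<^sub>v w) \<le> sqrt \<Delta> * vnorm w)"

text \<open>Support of the spectral projection 1_[a,b](X|_Y), where the two-sided
  restriction X|_Y acts on Y as y \<mapsto> P_Y (X y): the span of the
  eigenvectors of X|_Y with (real) eigenvalue in [a,b].\<close>
definition spectral_subspace ::
  "nat \<Rightarrow> complex vec set \<Rightarrow> complex mat \<Rightarrow> real \<Rightarrow> real \<Rightarrow> complex vec set" where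
  "spectral_subspace n Y X a b = vspan n
     {y \<in> Y. \<exists>e::real. a \<le> e \<and> e \<le> b \<and> proj Y (X *\<^sub>v y) = complex_of_real e \<cdot>\<^sub>v y}"

end

theory Submission
  imports Defs "HOL-Computational_Algebra.Fundamental_Theorem_Algebra"
begin


lemma cip_def:
  assumes "v \<in> carrier_vec n" "w \<in> carrier_vec n"
  shows "v \<bullet>c w = (\<Sum>i<n. v$i * cnj (w$i))"
  using assms by (auto simp: scalar_prod_def lessThan_atLeast0 intro!: sum.cong)

lemma cip_add_left: "(v::complex vec) \<in> carrier_vec n \<Longrightarrow> w \<in> carrier_vec n \<Longrightarrow> u \<in> carrier_vec n \<Longrightarrow>
  (v + w) \<bullet>c u = v \<bullet>c u + w \<bullet>c u"
  using add_scalar_prod_distrib[of v n w "conjugate u"] by simp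

lemma cip_add_right: "(v::complex vec) \<in> carrier_vec n \<Longrightarrow> w \<in> carrier_vec n \<Longrightarrow> u \<in> carrier_vec n \<Longrightarrow>
  u \<bullet>c (v + w) = u \<bullet>c v + u \<bullet>c w"
  using scalar_prod_add_distrib[of u n "conjugate v" "conjugate w"] conjugate_add_vec[of v n w] by simp

lemma vec_minus_add_cancel: "(v::complex vec) \<in> carrier_vec n \<Longrightarrow> w \<in> carrier_vec n \<Longrightarrow> (v - w) + w = v"
  by (intro eq_vecI) auto

lemma cip_minus_left: "(v::complex vec) \<in> carrier_vec n \<Longrightarrow> w \<in> carrier_vec n \<Longrightarrow> u \<in> carrier_vec n \<Longrightarrow>
  (v - w) \<bullet>c u = v \<bullet>c u - w \<bullet>c u"
  using cip_add_left[of "v - w" n w u] vec_minus_add_cancel[of v n w] by simp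

lemma cip_minus_right: "(v::complex vec) \<in> carrier_vec n \<Longrightarrow> w \<in> carrier_vec n \<Longrightarrow> u \<in> carrier_vec n \<Longrightarrow>
  u \<bullet>c (v - w) = u \<bullet>c v - u \<bullet>c w"
  using cip_add_right[of "v - w" n w u] vec_minus_add_cancel[of v n w] by simp

lemma cip_smult_left: "(v::complex vec) \<in> carrier_vec n \<Longrightarrow> w \<in> carrier_vec n \<Longrightarrow>
  (c \<cdot>\<^sub>v v) \<bullet>c w = c * (v \<bullet>c w)"
  by (simp add: cip_def[of _ n] sum_distrib_left algebra_simps cong: sum.cong_simp)

lemma cip_smult_right: "(v::complex vec) \<in> carrier_vec n \<Longrightarrow> w \<in> carrier_vec n \<Longrightarrow>
  v \<bullet>c (c \<cdot>\<^sub>v w) = cnj c * (v \<bullet>c w)"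
  by (simp add: cip_def[of _ n] sum_distrib_left algebra_simps cong: sum.cong_simp)

lemma cip_cnj: "(v::complex vec) \<in> carrier_vec n \<Longrightarrow> w \<in> carrier_vec n \<Longrightarrow> cnj (v \<bullet>c w) = w \<bullet>c v"
  by (simp add: cip_def[of _ n] sum_conjugate[symmetric] ac_simps cong: sum.cong_simp)

lemma cip_zero_left: "w \<in> carrier_vec n \<Longrightarrow> 0\<^sub>v n \<bullet>c w = 0"
  by (simp add: cip_def[of _ n])

lemma cip_zero_right: "w \<in> carrier_vec n \<Longrightarrow> w \<bullet>c 0\<^sub>v n = 0"
  by (simp add: cip_def[of _ n])

definition nsq :: "complex vec \<Rightarrow> real" where "nsq v = Re (v \<bullet>c v)"

lemma cip_self: "(v::complex vec) \<in> carrier_vec n \<Longrightarrow> v \<bullet>c v = complex_of_real (nsq v)"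
proof -
  assume v: "v \<in> carrier_vec n"
  have "Im (v \<bullet>c v) = 0"
    using cip_cnj[OF v v] by (metis cnj.simps(2) complex.expand neg_equal_zero)
  thus ?thesis unfolding nsq_def by (simp add: complex_eq_iff)
qed

lemma nsq_nonneg: "v \<in> carrier_vec n \<Longrightarrow> nsq v \<ge> 0"
  using conjugate_square_ge_0_vec[of v] unfolding nsq_def by (simp add: less_eq_complex_def)

lemma nsq_eq_0: "v \<in> carrier_vec n \<Longrightarrow> nsq v = 0 \<longleftrightarrow> v = 0\<^sub>v n"
  using conjugate_square_eq_0_vec[of v n] cip_self[of v n] by auto

lemma vnorm_sq: "v \<in> carrier_vec n \<Longrightarrow> (vnorm v)\<^sup>2 = nsq v"
  using nsq_nonneg[of v n] unfolding vnorm_def nsq_def[symmetric] by simp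

lemma cip_eq_0_imp: "(v::complex vec) \<in> carrier_vec n \<Longrightarrow> v \<bullet>c v = 0 \<Longrightarrow> v = 0\<^sub>v n"
  using conjugate_square_eq_0_vec by blast

lemma nsq_smult: "v \<in> carrier_vec n \<Longrightarrow> nsq (c \<cdot>\<^sub>v v) = (cmod c)^2 * nsq v"
proof -
  assume v: "v \<in> carrier_vec n"
  have "(c \<cdot>\<^sub>v v) \<bullet>c (c \<cdot>\<^sub>v v) = c * cnj c * (v \<bullet>c v)"
    using v by (simp add: cip_smult_left[of _ n] cip_smult_right[of _ n])
  also have "c * cnj c = complex_of_real ((cmod c)^2)" by (rule complex_norm_square[symmetric])
  finally have "(c \<cdot>\<^sub>v v) \<bullet>c (c \<cdot>\<^sub>v v) = complex_of_real ((cmod c)^2) * complex_of_real (nsq v)"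
    unfolding cip_self[OF v] .
  thus ?thesis unfolding nsq_def[of "c \<cdot>\<^sub>v v"] by simp
qed

lemma nsq_add_orth: "v \<in> carrier_vec n \<Longrightarrow> w \<in> carrier_vec n \<Longrightarrow> v \<bullet>c w = 0 \<Longrightarrow>
  nsq (v + w) = nsq v + nsq w"
proof -
  assume v: "v \<in> carrier_vec n" and w: "w \<in> carrier_vec n" and o: "v \<bullet>c w = 0"
  have o2: "w \<bullet>c v = 0" using cip_cnj[OF v w] o by simp
  show ?thesis unfolding nsq_def
    using v w o o2 by (simp add: cip_add_left[of _ n] cip_add_right[of _ n])
qed

lemma cauchy_schwarz:
  assumes v: "v \<in> carrier_vec n" and w: "w \<in> carrier_vec n"
  shows "(cmod (v \<bullet>c w))^2 \<le> nsq v * nsq w"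
proof (cases "w = 0\<^sub>v n")
  case True thus ?thesis using v by (simp add: cip_zero_right nsq_def)
next
  case False
  hence wpos: "nsq w > 0" using nsq_nonneg[OF w] nsq_eq_0[OF w] by linarith
  define b where "b = v \<bullet>c w"
  define N where "N = nsq w"
  define a where "a = b / complex_of_real N"
  have wv: "w \<bullet>c v = cnj b" using cip_cnj[OF v w] b_def by simp
  have aw: "a \<cdot>\<^sub>v w \<in> carrier_vec n" using w by simp
  have e1: "v \<bullet>c (v - a \<cdot>\<^sub>v w) = v \<bullet>c v - cnj a * b"
    using cip_minus_right[OF v aw v] cip_smult_right[OF v w] b_def by simp
  have e2: "w \<bullet>c (v - a \<cdot>\<^sub>v w) = cnj b - cnj a * complex_of_real N"
    using cip_minus_right[OF v aw w] cip_smult_right[OF w w] wv cip_self[OF w] N_def by simp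
  have e3: "(v - a \<cdot>\<^sub>v w) \<bullet>c (v - a \<cdot>\<^sub>v w) = v \<bullet>c (v - a \<cdot>\<^sub>v w) - a * (w \<bullet>c (v - a \<cdot>\<^sub>v w))"
    using cip_minus_left[OF v aw, of "v - a \<cdot>\<^sub>v w"] cip_smult_left[OF w, of "v - a \<cdot>\<^sub>v w"] v w by simp
  have Nz: "complex_of_real N \<noteq> 0" using wpos N_def by simp
  have bb: "b * cnj b = complex_of_real ((cmod b)^2)" by (rule complex_norm_square[symmetric])
  have f1: "a * cnj b = complex_of_real ((cmod b)^2 / N)"
    unfolding a_def of_real_divide bb[symmetric] by simp
  have f2: "a * cnj a * complex_of_real N = complex_of_real ((cmod b)^2 / N)"
    unfolding a_def of_real_divide bb[symmetric] using Nz by (simp add: field_simps)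
  have "(v - a \<cdot>\<^sub>v w) \<bullet>c (v - a \<cdot>\<^sub>v w) = v \<bullet>c v - cnj a * b - a * cnj b + a * cnj a * complex_of_real N"
    unfolding e3 e1 e2 by (simp add: algebra_simps)
  also have "cnj a * b = cnj (a * cnj b)" by simp
  also have "v \<bullet>c v = complex_of_real (nsq v)" by (rule cip_self[OF v])
  finally have "(v - a \<cdot>\<^sub>v w) \<bullet>c (v - a \<cdot>\<^sub>v w) = complex_of_real (nsq v - (cmod b)^2 / N)"
    unfolding f1 f2 by simp
  hence "nsq (v - a \<cdot>\<^sub>v w) = nsq v - (cmod b)^2 / N"
    unfolding nsq_def by simp
  moreover have "0 \<le> nsq (v - a \<cdot>\<^sub>v w)" using nsq_nonneg[of "v - a \<cdot>\<^sub>v w" n] v w by simp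
  ultimately have "(cmod b)^2 / N \<le> nsq v" by linarith
  thus ?thesis using wpos unfolding b_def N_def by (simp add: field_simps)
qed




lemma subspace_carrier: "is_subspace n S \<Longrightarrow> s \<in> S \<Longrightarrow> s \<in> carrier_vec n"
  unfolding is_subspace_def by auto
lemma subspace_zero: "is_subspace n S \<Longrightarrow> 0\<^sub>v n \<in> S"
  unfolding is_subspace_def by auto
lemma subspace_add: "is_subspace n S \<Longrightarrow> s \<in> S \<Longrightarrow> t \<in> S \<Longrightarrow> s + t \<in> S"
  unfolding is_subspace_def by auto
lemma subspace_smult: "is_subspace n S \<Longrightarrow> s \<in> S \<Longrightarrow> c \<cdot>\<^sub>v s \<in> S"
  unfolding is_subspace_def by auto
lemma vec_minus_as_add: "(s::complex vec) \<in> carrier_vec n \<Longrightarrow> t \<in> carrier_vec n \<Longrightarrow> s - t = s + (-1) \<cdot>\<^sub>v t"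
  by (intro eq_vecI) auto
lemma subspace_minus: "is_subspace n S \<Longrightarrow> s \<in> S \<Longrightarrow> t \<in> S \<Longrightarrow> s - t \<in> S"
  using vec_minus_as_add[of s n t] subspace_carrier[of n S] subspace_add[of n S] subspace_smult[of n S]
  by metis

definition lc :: "nat \<Rightarrow> (nat \<Rightarrow> complex) \<Rightarrow> (nat \<Rightarrow> complex vec) \<Rightarrow> nat \<Rightarrow> complex vec" where
  "lc n c vs m = vec n (\<lambda>i. \<Sum>j<m. c j * vs j $ i)"

lemma lc_carrier[simp]: "lc n c vs m \<in> carrier_vec n" by (simp add: lc_def)

lemma lc_0: "lc n c vs 0 = 0\<^sub>v n" by (intro eq_vecI) (auto simp: lc_def)

lemma lc_Suc: "vs m \<in> carrier_vec n \<Longrightarrow> lc n c vs (Suc m) = lc n c vs m + c m \<cdot>\<^sub>v vs m"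
  by (intro eq_vecI) (auto simp: lc_def)

lemma lc_cong: "(\<And>j. j < m \<Longrightarrow> c j = d j) \<Longrightarrow> lc n c vs m = lc n d vs m"
  unfolding lc_def by (intro eq_vecI) (auto intro!: sum.cong)

lemma cip_lc_left: "(\<forall>j<m. vs j \<in> carrier_vec n) \<Longrightarrow> w \<in> carrier_vec n \<Longrightarrow>
  lc n c vs m \<bullet>c w = (\<Sum>j<m. c j * (vs j \<bullet>c w))"
  by (induction m) (auto simp: lc_0 lc_Suc cip_zero_left cip_add_left[of _ n] cip_smult_left[of _ n])

lemma cip_lc_right: "(\<forall>j<m. vs j \<in> carrier_vec n) \<Longrightarrow> w \<in> carrier_vec n \<Longrightarrow>
  w \<bullet>c lc n c vs m = (\<Sum>j<m. cnj (c j) * (w \<bullet>c vs j))"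
  by (induction m) (auto simp: lc_0 lc_Suc cip_zero_right cip_add_right[of _ n] cip_smult_right[of _ n])

lemma lc_in_subspace: "is_subspace n S \<Longrightarrow> (\<forall>j<m. vs j \<in> S) \<Longrightarrow> lc n c vs m \<in> S"
proof (induction m)
  case 0 thus ?case by (simp add: lc_0 subspace_zero)
next
  case (Suc m)
  hence "lc n c vs m \<in> S" "vs m \<in> S" by auto
  thus ?case using Suc.prems lc_Suc[of vs m n c] subspace_carrier subspace_add subspace_smult by metis
qed

definition orthonormal :: "nat \<Rightarrow> (nat \<Rightarrow> complex vec) \<Rightarrow> nat \<Rightarrow> bool" where
  "orthonormal n vs m \<longleftrightarrow> (\<forall>j<m. vs j \<in> carrier_vec n) \<and>
     (\<forall>i<m. \<forall>j<m. vs i \<bullet>c vs j = (if i = j then 1 else 0))"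

lemma orthonormal_carrier: "orthonormal n vs m \<Longrightarrow> \<forall>j<m. vs j \<in> carrier_vec n"
  unfolding orthonormal_def by auto

lemma lc_cip_basis: assumes "orthonormal n vs m" "k < m"
  shows "lc n c vs m \<bullet>c vs k = c k"
proof -
  have "lc n c vs m \<bullet>c vs k = (\<Sum>j<m. c j * (vs j \<bullet>c vs k))"
    using assms by (intro cip_lc_left) (auto simp: orthonormal_def)
  also have "\<dots> = (\<Sum>j<m. if j = k then c j else 0)"
    using assms by (intro sum.cong) (auto simp: orthonormal_def)
  also have "\<dots> = c k" using assms(2) by simp
  finally show ?thesis .
qed

lemma lc_self_cip: assumes "orthonormal n vs m"
  shows "lc n c vs m \<bullet>c lc n d vs m = (\<Sum>j<m. c j * cnj (d j))"
proof -
  have "lc n c vs m \<bullet>c lc n d vs m = (\<Sum>j<m. c j * (vs j \<bullet>c lc n d vs m))"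
    using assms by (intro cip_lc_left) (auto simp: orthonormal_def)
  also have "\<dots> = (\<Sum>j<m. c j * cnj (d j))"
  proof (intro sum.cong refl)
    fix j assume j: "j \<in> {..<m}"
    hence "vs j \<in> carrier_vec n" using assms by (auto simp: orthonormal_def)
    hence "vs j \<bullet>c lc n d vs m = cnj (lc n d vs m \<bullet>c vs j)" using cip_cnj[of "lc n d vs m" n "vs j"] by simp
    thus "c j * (vs j \<bullet>c lc n d vs m) = c j * cnj (d j)" using lc_cip_basis[OF assms, of j d] j by simp
  qed
  finally show ?thesis .
qed

lemma sum_if_less: "(n::nat) \<le> m \<Longrightarrow> (\<Sum>l<m. if l < n then f l else 0) = (\<Sum>l<n. f l)"
proof -
  assume nm: "n \<le> m"
  have "(\<Sum>l<m. if l < n then f l else 0) = (\<Sum>l\<in>{..<m} \<inter> {l. l < n}. f l)"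
    by (simp add: sum.inter_restrict)
  also have "{..<m} \<inter> {l. l < n} = {..<n}" using nm by auto
  finally show ?thesis .
qed

lemma orthonormal_bound: assumes on: "orthonormal n vs m" shows "m \<le> n"
proof (rule ccontr)
  assume "\<not> m \<le> n" hence nm: "n < m" by simp
  define U where "U = mat m m (\<lambda>(i,j). if i < n then vs j $ i else (0::complex))"
  define Uh where "Uh = mat m m (\<lambda>(i,j). cnj (U $$ (j,i)))"
  have U: "U \<in> carrier_mat m m" and Uh: "Uh \<in> carrier_mat m m" unfolding U_def Uh_def by auto
  have "Uh * U = 1\<^sub>m m"
  proof (rule eq_matI)
    fix i j assume "i < dim_row (1\<^sub>m m)" "j < dim_col (1\<^sub>m m)"
    hence i: "i < m" and j: "j < m" by auto
    have "(Uh * U) $$ (i,j) = (\<Sum>l<m. Uh $$ (i,l) * U $$ (l,j))"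
      using U Uh i j by (simp add: scalar_prod_def lessThan_atLeast0)
    also have "\<dots> = (\<Sum>l<m. if l < n then vs j $ l * cnj (vs i $ l) else 0)"
      using i j by (intro sum.cong) (auto simp: U_def Uh_def)
    also have "\<dots> = (\<Sum>l<n. vs j $ l * cnj (vs i $ l))" using nm by (simp add: sum_if_less)
    also have "\<dots> = vs j \<bullet>c vs i" using on i j by (intro cip_def[symmetric]) (auto simp: orthonormal_def)
    also have "\<dots> = 1\<^sub>m m $$ (i,j)" using on i j by (auto simp: orthonormal_def)
    finally show "(Uh * U) $$ (i,j) = 1\<^sub>m m $$ (i,j)" .
  qed (insert U Uh, auto)
  hence "det Uh * det U = 1" using det_mult[OF Uh U] by simp
  moreover have "det U = 0"
  proof -
    have "U = mat\<^sub>r m m (\<lambda>i. if i = n then 0\<^sub>v m else row U i)"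
      by (intro eq_matI) (auto simp: U_def)
    moreover have "det (mat\<^sub>r m m (\<lambda>i. if i = n then 0\<^sub>v m else row U i)) = 0"
      by (rule det_row_0[OF nm]) (use U in auto)
    ultimately show ?thesis by simp
  qed
  ultimately show False by simp
qed

lemma normalize_unit:
  assumes r: "r \<in> carrier_vec n" and r0: "r \<noteq> 0\<^sub>v n"
  defines "u \<equiv> complex_of_real (1 / sqrt (nsq r)) \<cdot>\<^sub>v r"
  shows "u \<bullet>c u = 1"
proof -
  have N: "nsq r > 0" using nsq_nonneg[OF r] nsq_eq_0[OF r] r0 by linarith
  have "u \<bullet>c u = complex_of_real (1 / sqrt (nsq r)) * complex_of_real (1 / sqrt (nsq r)) * (r \<bullet>c r)"
    unfolding u_def using r by (simp add: cip_smult_left[of _ n] cip_smult_right[of _ n])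
  also have "\<dots> = complex_of_real ((1 / sqrt (nsq r)) * (1 / sqrt (nsq r)) * nsq r)"
    unfolding cip_self[OF r] of_real_mult by (rule refl)
  finally have X: "u \<bullet>c u = complex_of_real ((1 / sqrt (nsq r)) * (1 / sqrt (nsq r)) * nsq r)" .
  have "(1 / sqrt (nsq r)) * (1 / sqrt (nsq r)) * nsq r = 1"
    using N by (simp add: field_simps real_sqrt_mult[symmetric])
  thus ?thesis using X by simp
qed

lemma orthonormal_extend:
  assumes on: "orthonormal n vs m" and u: "u \<in> carrier_vec n" "u \<bullet>c u = 1" "\<forall>j<m. u \<bullet>c vs j = 0"
  shows "orthonormal n (vs(m := u)) (Suc m)"
  unfolding orthonormal_def
proof (intro conjI allI impI)
  fix j assume "j < Suc m" thus "(vs(m := u)) j \<in> carrier_vec n" using on u by (auto simp: orthonormal_def)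
next
  fix i j assume i: "i < Suc m" and j: "j < Suc m"
  show "(vs(m := u)) i \<bullet>c (vs(m := u)) j = (if i = j then 1 else 0)"
  proof (cases "i = m")
    case True thus ?thesis using u j by auto
  next
    case False
    hence i': "i < m" using i by simp
    show ?thesis
    proof (cases "j = m")
      case True
      have "vs i \<bullet>c u = cnj (u \<bullet>c vs i)" using cip_cnj[of u n "vs i"] u on i' by (auto simp: orthonormal_def)
      thus ?thesis using True i' u by auto
    next
      case False thus ?thesis using on i' j \<open>i \<noteq> m\<close> by (auto simp: orthonormal_def)
    qed
  qed
qed

lemma max_family:
  assumes ext: "\<And>vs m. orthonormal n vs m \<Longrightarrow> (\<forall>j<m. Q (vs j)) \<Longrightarrow> \<not> P vs m \<Longrightarrow>
     \<exists>u. u \<in> carrier_vec n \<and> Q u \<and> u \<bullet>c u = 1 \<and> (\<forall>j<m. u \<bullet>c vs j = 0)"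
  shows "\<exists>vs m. orthonormal n vs m \<and> (\<forall>j<m. Q (vs j)) \<and> P vs m"
proof -
  define M where "M = {m. \<exists>vs. orthonormal n vs m \<and> (\<forall>j<m. Q (vs j))}"
  have "0 \<in> M" unfolding M_def orthonormal_def by auto
  moreover have Mb: "M \<subseteq> {..n}" unfolding M_def using orthonormal_bound by auto
  hence fin: "finite M" using finite_subset by blast
  ultimately have "Max M \<in> M" using Max_in by blast
  then obtain vs where on: "orthonormal n vs (Max M)" and Q: "\<forall>j<Max M. Q (vs j)"
    unfolding M_def by auto
  show ?thesis
  proof (rule ccontr)
    assume "\<not> ?thesis"
    hence "\<not> P vs (Max M)" using on Q by blast
    from ext[OF on Q this] obtain u where u: "u \<in> carrier_vec n" "Q u" "u \<bullet>c u = 1"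
      "\<forall>j<Max M. u \<bullet>c vs j = 0" by blast
    have "orthonormal n (vs(Max M := u)) (Suc (Max M))" by (rule orthonormal_extend[OF on u(1) u(3) u(4)])
    moreover have "\<forall>j<Suc (Max M). Q ((vs(Max M := u)) j)" using Q u(2) by auto
    ultimately have "Suc (Max M) \<in> M" unfolding M_def by blast
    hence "Suc (Max M) \<le> Max M" using fin by simp
    thus False by simp
  qed
qed

lemma subspace_basis: assumes S: "is_subspace n S"
  shows "\<exists>vs m. orthonormal n vs m \<and> (\<forall>j<m. vs j \<in> S) \<and> (\<forall>s\<in>S. s = lc n (\<lambda>j. s \<bullet>c vs j) vs m)"
proof (rule max_family)
  fix vs m assume on: "orthonormal n vs m" and inS: "\<forall>j<m. vs j \<in> S"
    and np: "\<not> (\<forall>s\<in>S. s = lc n (\<lambda>j. s \<bullet>c vs j) vs m)"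
  then obtain s where s: "s \<in> S" and ne: "s \<noteq> lc n (\<lambda>j. s \<bullet>c vs j) vs m" by blast
  define r where "r = s - lc n (\<lambda>j. s \<bullet>c vs j) vs m"
  have sc: "s \<in> carrier_vec n" using s S subspace_carrier by blast
  have rS: "r \<in> S" unfolding r_def using subspace_minus[OF S s lc_in_subspace[OF S inS]] .
  have rc: "r \<in> carrier_vec n" using rS S subspace_carrier by blast
  have r0: "r \<noteq> 0\<^sub>v n"
  proof
    assume r0: "r = 0\<^sub>v n"
    have "s = r + lc n (\<lambda>j. s \<bullet>c vs j) vs m" unfolding r_def using sc
      by (intro vec_minus_add_cancel[symmetric]) auto
    also have "\<dots> = lc n (\<lambda>j. s \<bullet>c vs j) vs m" unfolding r0 by simp
    finally show False using ne by simp
  qed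
  have rorth: "\<forall>j<m. r \<bullet>c vs j = 0"
  proof (intro allI impI)
    fix j assume j: "j < m"
    have vj: "vs j \<in> carrier_vec n" using on j by (auto simp: orthonormal_def)
    show "r \<bullet>c vs j = 0" unfolding r_def
      using cip_minus_left[OF sc lc_carrier vj] lc_cip_basis[OF on j] by simp
  qed
  define u where "u = complex_of_real (1 / sqrt (nsq r)) \<cdot>\<^sub>v r"
  have "u \<bullet>c u = 1" unfolding u_def by (rule normalize_unit[OF rc r0])
  moreover have "u \<in> S" unfolding u_def using subspace_smult[OF S rS] .
  moreover have "u \<in> carrier_vec n" unfolding u_def using rc by simp
  moreover have "\<forall>j<m. u \<bullet>c vs j = 0" unfolding u_def using rorth rc on
    by (auto simp: cip_smult_left[of _ n] orthonormal_def)
  ultimately show "\<exists>u. u \<in> carrier_vec n \<and> u \<in> S \<and> u \<bullet>c u = 1 \<and> (\<forall>j<m. u \<bullet>c vs j = 0)" by blast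
qed




lemma proj_exists: assumes S: "is_subspace n S" and v: "v \<in> carrier_vec n"
  shows "\<exists>p\<in>S. \<forall>y\<in>S. (v - p) \<bullet>c y = 0"
proof -
  obtain vs m where on: "orthonormal n vs m" and inS: "\<forall>j<m. vs j \<in> S"
    and sp: "\<forall>s\<in>S. s = lc n (\<lambda>j. s \<bullet>c vs j) vs m"
    using subspace_basis[OF S] by blast
  define p where "p = lc n (\<lambda>j. v \<bullet>c vs j) vs m"
  have pS: "p \<in> S" using lc_in_subspace[OF S inS] p_def by simp
  have vc: "\<forall>j<m. vs j \<in> carrier_vec n" using on by (simp add: orthonormal_def)
  have pc: "p \<in> carrier_vec n" unfolding p_def by simp
  have o: "\<forall>j<m. (v - p) \<bullet>c vs j = 0"
  proof (intro allI impI)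
    fix j assume j: "j < m"
    show "(v - p) \<bullet>c vs j = 0"
      using cip_minus_left[OF v pc, of "vs j"] vc j lc_cip_basis[OF on j] p_def by simp
  qed
  show ?thesis
  proof (intro bexI[OF _ pS] ballI)
    fix y assume y: "y \<in> S"
    have "(v - p) \<bullet>c y = (v - p) \<bullet>c lc n (\<lambda>j. y \<bullet>c vs j) vs m" using sp y by metis
    also have "\<dots> = (\<Sum>j<m. cnj (y \<bullet>c vs j) * ((v - p) \<bullet>c vs j))"
      using vc v pc by (intro cip_lc_right) auto
    also have "\<dots> = 0" using o by simp
    finally show "(v - p) \<bullet>c y = 0" .
  qed
qed

lemma proj_unique: assumes S: "is_subspace n S" and v: "v \<in> carrier_vec n"
  and p: "p \<in> S" and o: "\<forall>y\<in>S. (v - p) \<bullet>c y = 0"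
  shows "proj S v = p"
  unfolding proj_def
proof (rule the_equality)
  show "p \<in> S \<and> (\<forall>y\<in>S. (v - p) \<bullet>c y = 0)" using p o by blast
next
  fix p' assume p': "p' \<in> S \<and> (\<forall>y\<in>S. (v - p') \<bullet>c y = 0)"
  have pc: "p \<in> carrier_vec n" "p' \<in> carrier_vec n" using p p' S subspace_carrier by blast+
  define d where "d = p' - p"
  have dS: "d \<in> S" unfolding d_def using subspace_minus[OF S] p p' by blast
  have dc: "d \<in> carrier_vec n" unfolding d_def using pc by simp
  have "d = (v - p) - (v - p')" unfolding d_def using pc v by (intro eq_vecI) auto
  hence "d \<bullet>c d = (v - p) \<bullet>c d - (v - p') \<bullet>c d"
    using cip_minus_left[of "v - p" n "v - p'" d] pc v dc by simp
  also have "\<dots> = 0" using o p' dS by simp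
  finally have "d = 0\<^sub>v n" using cip_eq_0_imp[OF dc] by simp
  thus "p' = p" unfolding d_def using pc by (metis minus_cancel_vec vec_minus_add_cancel left_zero_vec)
qed

lemma proj_char: assumes S: "is_subspace n S" and v: "v \<in> carrier_vec n"
  shows "proj S v \<in> S" "\<forall>y\<in>S. (v - proj S v) \<bullet>c y = 0"
proof -
  obtain p where p: "p \<in> S" "\<forall>y\<in>S. (v - p) \<bullet>c y = 0" using proj_exists[OF S v] by blast
  have "proj S v = p" by (rule proj_unique[OF S v p])
  thus "proj S v \<in> S" "\<forall>y\<in>S. (v - proj S v) \<bullet>c y = 0" using p by auto
qed

lemma proj_in: "is_subspace n S \<Longrightarrow> v \<in> carrier_vec n \<Longrightarrow> proj S v \<in> S"
  using proj_char by blast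
lemma proj_carrier: "is_subspace n S \<Longrightarrow> v \<in> carrier_vec n \<Longrightarrow> proj S v \<in> carrier_vec n"
  using proj_in subspace_carrier by blast
lemma proj_orth: "is_subspace n S \<Longrightarrow> v \<in> carrier_vec n \<Longrightarrow> y \<in> S \<Longrightarrow> (v - proj S v) \<bullet>c y = 0"
  using proj_char by blast

lemma proj_cip: assumes S: "is_subspace n S" and v: "v \<in> carrier_vec n" and y: "y \<in> S"
  shows "v \<bullet>c y = proj S v \<bullet>c y"
  using proj_orth[OF S v y] cip_minus_left[OF v proj_carrier[OF S v], of y] subspace_carrier[OF S y] by simp

lemma proj_id: assumes S: "is_subspace n S" and s: "s \<in> S" shows "proj S s = s"
proof -
  have sc: "s \<in> carrier_vec n" using S s subspace_carrier by blast
  show ?thesis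
  proof (rule proj_unique[OF S sc s], intro ballI)
    fix y assume "y \<in> S"
    hence "y \<in> carrier_vec n" using S subspace_carrier by blast
    moreover have "s - s = 0\<^sub>v n" using sc by (intro eq_vecI) auto
    ultimately show "(s - s) \<bullet>c y = 0" by (simp add: cip_zero_left)
  qed
qed

lemma proj_add: assumes S: "is_subspace n S" and v: "v \<in> carrier_vec n" and w: "w \<in> carrier_vec n"
  shows "proj S (v + w) = proj S v + proj S w"
proof (rule proj_unique[OF S])
  show "v + w \<in> carrier_vec n" using v w by simp
  show "proj S v + proj S w \<in> S" using subspace_add[OF S proj_in[OF S v] proj_in[OF S w]] .
  show "\<forall>y\<in>S. (v + w - (proj S v + proj S w)) \<bullet>c y = 0"
  proof
    fix y assume y: "y \<in> S"
    have yc: "y \<in> carrier_vec n" using y S subspace_carrier by blast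
    have pv: "proj S v \<in> carrier_vec n" and pw: "proj S w \<in> carrier_vec n" using proj_carrier S v w by blast+
    have "v + w - (proj S v + proj S w) = (v - proj S v) + (w - proj S w)"
      using pv pw v w by (intro eq_vecI) auto
    hence "(v + w - (proj S v + proj S w)) \<bullet>c y = (v - proj S v) \<bullet>c y + (w - proj S w) \<bullet>c y"
      using cip_add_left[of "v - proj S v" n "w - proj S w" y] pv pw v w yc by simp
    thus "(v + w - (proj S v + proj S w)) \<bullet>c y = 0" using proj_orth[OF S v y] proj_orth[OF S w y] by simp
  qed
qed

lemma proj_smult: assumes S: "is_subspace n S" and v: "v \<in> carrier_vec n"
  shows "proj S (c \<cdot>\<^sub>v v) = c \<cdot>\<^sub>v proj S v"
proof (rule proj_unique[OF S])
  show "c \<cdot>\<^sub>v v \<in> carrier_vec n" using v by simp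
  show "c \<cdot>\<^sub>v proj S v \<in> S" using subspace_smult[OF S proj_in[OF S v]] .
  show "\<forall>y\<in>S. (c \<cdot>\<^sub>v v - c \<cdot>\<^sub>v proj S v) \<bullet>c y = 0"
  proof
    fix y assume y: "y \<in> S"
    have yc: "y \<in> carrier_vec n" using y S subspace_carrier by blast
    have pv: "proj S v \<in> carrier_vec n" using proj_carrier S v by blast
    have "c \<cdot>\<^sub>v v - c \<cdot>\<^sub>v proj S v = c \<cdot>\<^sub>v (v - proj S v)"
      using pv v by (intro eq_vecI) (auto simp: algebra_simps)
    hence "(c \<cdot>\<^sub>v v - c \<cdot>\<^sub>v proj S v) \<bullet>c y = c * ((v - proj S v) \<bullet>c y)"
      using cip_smult_left[of "v - proj S v" n y c] pv v yc by simp
    thus "(c \<cdot>\<^sub>v v - c \<cdot>\<^sub>v proj S v) \<bullet>c y = 0" using proj_orth[OF S v y] by simp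
  qed
qed

lemma proj_minus: assumes S: "is_subspace n S" and v: "v \<in> carrier_vec n" and w: "w \<in> carrier_vec n"
  shows "proj S (v - w) = proj S v - proj S w"
proof -
  have "proj S (v - w) = proj S (v + (-1) \<cdot>\<^sub>v w)" using vec_minus_as_add[OF v w] by simp
  also have "\<dots> = proj S v + (-1) \<cdot>\<^sub>v proj S w" using proj_add[OF S v] proj_smult[OF S w] w by simp
  also have "\<dots> = proj S v - proj S w" using vec_minus_as_add[OF proj_carrier[OF S v] proj_carrier[OF S w]] by simp
  finally show ?thesis .
qed

lemma pythag: assumes S: "is_subspace n S" and v: "v \<in> carrier_vec n"
  shows "nsq v = nsq (proj S v) + nsq (v - proj S v)"
proof -
  have pv: "proj S v \<in> carrier_vec n" using proj_carrier S v by blast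
  have o: "(v - proj S v) \<bullet>c proj S v = 0" using proj_orth[OF S v proj_in[OF S v]] .
  have o2: "proj S v \<bullet>c (v - proj S v) = 0" using cip_cnj[of "v - proj S v" n "proj S v"] o pv v by simp
  have "v = proj S v + (v - proj S v)" using pv v by (intro eq_vecI) auto
  hence "nsq v = nsq (proj S v + (v - proj S v))" by simp
  also have "\<dots> = nsq (proj S v) + nsq (v - proj S v)" using nsq_add_orth[OF pv _ o2] v pv by simp
  finally show ?thesis .
qed




definition herm_on :: "nat \<Rightarrow> complex vec set \<Rightarrow> (complex vec \<Rightarrow> complex vec) \<Rightarrow> bool" where
  "herm_on n S g \<longleftrightarrow> (\<forall>s\<in>S. g s \<in> S) \<and> (\<forall>s\<in>S. \<forall>t\<in>S. g (s + t) = g s + g t)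
     \<and> (\<forall>s\<in>S. \<forall>c. g (c \<cdot>\<^sub>v s) = c \<cdot>\<^sub>v g s) \<and> (\<forall>s\<in>S. \<forall>t\<in>S. g s \<bullet>c t = s \<bullet>c g t)"

lemma herm_onD: assumes "herm_on n S g"
  shows "s \<in> S \<Longrightarrow> g s \<in> S" "s \<in> S \<Longrightarrow> t \<in> S \<Longrightarrow> g (s + t) = g s + g t"
    "s \<in> S \<Longrightarrow> g (c \<cdot>\<^sub>v s) = c \<cdot>\<^sub>v g s" "s \<in> S \<Longrightarrow> t \<in> S \<Longrightarrow> g s \<bullet>c t = s \<bullet>c g t"
  using assms unfolding herm_on_def by auto

lemma herm_on_mono: "herm_on n S g \<Longrightarrow> S' \<subseteq> S \<Longrightarrow> (\<forall>s\<in>S'. g s \<in> S') \<Longrightarrow> herm_on n S' g"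
  unfolding herm_on_def by blast

lemma g_lc: assumes S: "is_subspace n S" and g: "herm_on n S g" and vs: "\<forall>j<m. vs j \<in> S"
  shows "g (lc n c vs m) = lc n c (\<lambda>j. g (vs j)) m"
  using vs
proof (induction m)
  case 0
  have z: "0\<^sub>v n \<in> S" using subspace_zero[OF S] .
  have zz: "0 \<cdot>\<^sub>v 0\<^sub>v n = (0\<^sub>v n :: complex vec)" by (intro eq_vecI) auto
  have "g (0\<^sub>v n) = g (0 \<cdot>\<^sub>v 0\<^sub>v n)" unfolding zz ..
  also have "\<dots> = 0 \<cdot>\<^sub>v g (0\<^sub>v n)" using herm_onD(3)[OF g z] .
  also have "\<dots> = 0\<^sub>v n" using subspace_carrier[OF S herm_onD(1)[OF g z]] by (intro eq_vecI) auto
  finally show ?case by (simp add: lc_0)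
next
  case (Suc m)
  have vm: "vs m \<in> S" using Suc.prems by auto
  have vmc: "vs m \<in> carrier_vec n" using subspace_carrier[OF S vm] .
  have gvmc: "g (vs m) \<in> carrier_vec n" using subspace_carrier[OF S herm_onD(1)[OF g vm]] .
  have l: "lc n c vs m \<in> S" using lc_in_subspace[OF S] Suc.prems by auto
  have "g (lc n c vs (Suc m)) = g (lc n c vs m + c m \<cdot>\<^sub>v vs m)" using lc_Suc[of vs m n c, OF vmc] by simp
  also have "\<dots> = g (lc n c vs m) + c m \<cdot>\<^sub>v g (vs m)"
    using herm_onD(2)[OF g l subspace_smult[OF S vm]] herm_onD(3)[OF g vm] by simp
  also have "\<dots> = lc n c (\<lambda>j. g (vs j)) (Suc m)" using Suc lc_Suc[of "\<lambda>j. g (vs j)" m n c, OF gvmc] by simp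
  finally show ?case .
qed

lemma expand_eq: assumes on: "orthonormal n vs m" and x: "x = lc n (\<lambda>j. x \<bullet>c vs j) vs m"
  and y: "y = lc n (\<lambda>j. y \<bullet>c vs j) vs m" and e: "\<forall>j<m. x \<bullet>c vs j = y \<bullet>c vs j"
  shows "x = y"
proof -
  have "lc n (\<lambda>j. x \<bullet>c vs j) vs m = lc n (\<lambda>j. y \<bullet>c vs j) vs m" using e by (intro lc_cong) auto
  thus ?thesis using x y by simp
qed

lemma residual:
  assumes S: "is_subspace n S" and on: "orthonormal n vs m" and inS: "\<forall>j<m. vs j \<in> S"
    and s: "s \<in> S" and ne: "s \<noteq> lc n (\<lambda>j. s \<bullet>c vs j) vs m"
  defines "r \<equiv> s - lc n (\<lambda>j. s \<bullet>c vs j) vs m"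
  shows "r \<in> S" "r \<noteq> 0\<^sub>v n" "\<forall>j<m. r \<bullet>c vs j = 0"
proof -
  have sc: "s \<in> carrier_vec n" using s S subspace_carrier by blast
  show rS: "r \<in> S" unfolding r_def using subspace_minus[OF S s lc_in_subspace[OF S inS]] .
  show "r \<noteq> 0\<^sub>v n"
  proof
    assume r0: "r = 0\<^sub>v n"
    have "s = r + lc n (\<lambda>j. s \<bullet>c vs j) vs m" unfolding r_def using sc
      by (intro vec_minus_add_cancel[symmetric]) auto
    also have "\<dots> = lc n (\<lambda>j. s \<bullet>c vs j) vs m" unfolding r0 by simp
    finally show False using ne by simp
  qed
  show "\<forall>j<m. r \<bullet>c vs j = 0"
  proof (intro allI impI)
    fix j assume j: "j < m"
    have vj: "vs j \<in> carrier_vec n" using on j by (auto simp: orthonormal_def)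
    show "r \<bullet>c vs j = 0" unfolding r_def
      using cip_minus_left[OF sc lc_carrier vj] lc_cip_basis[OF on j] by simp
  qed
qed

lemma eigen_exists:
  assumes S: "is_subspace n S" and g: "herm_on n S g" and s0: "s0 \<in> S" "s0 \<noteq> 0\<^sub>v n"
  shows "\<exists>u\<in>S. u \<noteq> 0\<^sub>v n \<and> (\<exists>d::real. g u = complex_of_real d \<cdot>\<^sub>v u)"
proof -
  obtain vs m where on: "orthonormal n vs m" and inS: "\<forall>j<m. vs j \<in> S"
    and sp: "\<forall>s\<in>S. s = lc n (\<lambda>j. s \<bullet>c vs j) vs m"
    using subspace_basis[OF S] by blast
  have vc: "\<forall>j<m. vs j \<in> carrier_vec n" using on by (simp add: orthonormal_def)
  have gvc: "\<forall>j<m. g (vs j) \<in> carrier_vec n" using inS herm_onD(1)[OF g] subspace_carrier[OF S] by blast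
  have m0: "m > 0"
  proof (rule ccontr)
    assume "\<not> m > 0" hence "m = 0" by simp
    hence "s0 = 0\<^sub>v n" using sp s0(1) lc_0 by metis
    thus False using s0(2) by simp
  qed
  define M where "M = mat m m (\<lambda>(i,j). g (vs j) \<bullet>c vs i)"
  have M: "M \<in> carrier_mat m m" unfolding M_def by simp
  have "degree (char_poly M) = m" using degree_monic_char_poly[OF M] by simp
  hence "\<not> constant (poly (char_poly M))" using m0 constant_degree[of "char_poly M"] by simp
  then obtain mu where "poly (char_poly M) mu = 0" using fundamental_theorem_of_algebra by blast
  hence "eigenvalue M mu" using eigenvalue_root_char_poly[OF M] by simp
  then obtain c where "eigenvector M c mu" unfolding eigenvalue_def by blast
  hence c: "c \<in> carrier_vec m" "c \<noteq> 0\<^sub>v m" "M *\<^sub>v c = mu \<cdot>\<^sub>v c"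
    unfolding eigenvector_def using M by auto
  define x where "x = lc n (\<lambda>j. c $ j) vs m"
  have xS: "x \<in> S" unfolding x_def using lc_in_subspace[OF S inS] .
  have xc: "x \<in> carrier_vec n" unfolding x_def by simp
  have xco: "\<And>i. i < m \<Longrightarrow> x \<bullet>c vs i = c $ i" unfolding x_def using lc_cip_basis[OF on] by simp
  have x0: "x \<noteq> 0\<^sub>v n"
  proof
    assume "x = 0\<^sub>v n"
    hence "\<forall>i<m. c $ i = 0" using xco vc cip_zero_left by metis
    hence "c = 0\<^sub>v m" using c(1) by (intro eq_vecI) auto
    thus False using c(2) by simp
  qed
  have gx: "g x = lc n (\<lambda>j. c $ j) (\<lambda>j. g (vs j)) m" unfolding x_def by (rule g_lc[OF S g inS])
  have gxS: "g x \<in> S" using herm_onD(1)[OF g xS] .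
  have muxS: "mu \<cdot>\<^sub>v x \<in> S" using subspace_smult[OF S xS] .
  have co: "\<forall>i<m. g x \<bullet>c vs i = (mu \<cdot>\<^sub>v x) \<bullet>c vs i"
  proof (intro allI impI)
    fix i assume i: "i < m"
    have "g x \<bullet>c vs i = (\<Sum>j<m. c $ j * (g (vs j) \<bullet>c vs i))"
      unfolding gx using gvc vc i by (intro cip_lc_left) auto
    also have "\<dots> = (\<Sum>j<m. M $$ (i,j) * c $ j)" using i by (intro sum.cong) (auto simp: M_def)
    also have "\<dots> = (M *\<^sub>v c) $ i" using M c(1) i by (simp add: scalar_prod_def lessThan_atLeast0)
    also have "\<dots> = mu * c $ i" using c(3) c(1) i by simp
    also have "\<dots> = (mu \<cdot>\<^sub>v x) \<bullet>c vs i" using cip_smult_left[OF xc, of "vs i" mu] vc i xco by simp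
    finally show "g x \<bullet>c vs i = (mu \<cdot>\<^sub>v x) \<bullet>c vs i" .
  qed
  have gxe: "g x = mu \<cdot>\<^sub>v x"
    by (rule expand_eq[OF on _ _ co]) (use sp gxS muxS in auto)
  have "g x \<bullet>c x = x \<bullet>c g x" using herm_onD(4)[OF g xS xS] .
  hence "mu * (x \<bullet>c x) = cnj mu * (x \<bullet>c x)" unfolding gxe
    using cip_smult_left[OF xc xc] cip_smult_right[OF xc xc] by simp
  moreover have "x \<bullet>c x \<noteq> 0" using x0 cip_eq_0_imp[OF xc] by blast
  ultimately have "mu = cnj mu" by simp
  hence "Im mu = Im (cnj mu)" by (rule arg_cong)
  hence "Im mu = 0" by simp
  hence "mu = complex_of_real (Re mu)" by (simp add: complex_eq_iff)
  hence "g x = complex_of_real (Re mu) \<cdot>\<^sub>v x" using gxe by simp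
  thus ?thesis using xS x0 by blast
qed

lemma eigenbasis:
  assumes S: "is_subspace n S" and g: "herm_on n S g"
  shows "\<exists>vs m ds. orthonormal n vs m \<and> (\<forall>j<m. vs j \<in> S \<and> g (vs j) = complex_of_real (ds j) \<cdot>\<^sub>v vs j)
     \<and> (\<forall>s\<in>S. s = lc n (\<lambda>j. s \<bullet>c vs j) vs m)"
proof -
  have "\<exists>vs m. orthonormal n vs m \<and> (\<forall>j<m. vs j \<in> S \<and> (\<exists>d::real. g (vs j) = complex_of_real d \<cdot>\<^sub>v vs j))
     \<and> (\<forall>s\<in>S. s = lc n (\<lambda>j. s \<bullet>c vs j) vs m)"
  proof (rule max_family[where Q = "\<lambda>u. u \<in> S \<and> (\<exists>d::real. g u = complex_of_real d \<cdot>\<^sub>v u)"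
        and P = "\<lambda>vs m. \<forall>s\<in>S. s = lc n (\<lambda>j. s \<bullet>c vs j) vs m"])
    fix vs m assume on: "orthonormal n vs m"
      and Q: "\<forall>j<m. vs j \<in> S \<and> (\<exists>d::real. g (vs j) = complex_of_real d \<cdot>\<^sub>v vs j)"
      and np: "\<not> (\<forall>s\<in>S. s = lc n (\<lambda>j. s \<bullet>c vs j) vs m)"
    then obtain s where s: "s \<in> S" and ne: "s \<noteq> lc n (\<lambda>j. s \<bullet>c vs j) vs m" by blast
    have inS: "\<forall>j<m. vs j \<in> S" using Q by blast
    have vc: "\<forall>j<m. vs j \<in> carrier_vec n" using on by (simp add: orthonormal_def)
    define S' where "S' = {x \<in> S. \<forall>j<m. x \<bullet>c vs j = 0}"
    have S'S: "S' \<subseteq> S" unfolding S'_def by auto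
    have S': "is_subspace n S'"
      unfolding is_subspace_def
    proof (intro conjI ballI allI)
      show "S' \<subseteq> carrier_vec n" using S'S S subspace_carrier by blast
      show "0\<^sub>v n \<in> S'" unfolding S'_def using subspace_zero[OF S] vc cip_zero_left by auto
      fix u v assume u: "u \<in> S'" and v: "v \<in> S'"
      show "u + v \<in> S'" unfolding S'_def using u v subspace_add[OF S] vc subspace_carrier[OF S]
        cip_add_left[of u n v] unfolding S'_def by auto
    next
      fix c u assume u: "u \<in> S'"
      show "c \<cdot>\<^sub>v u \<in> S'" unfolding S'_def using u subspace_smult[OF S] vc subspace_carrier[OF S]
        cip_smult_left[of u n] unfolding S'_def by auto
    qed
    have gS': "\<forall>x\<in>S'. g x \<in> S'"
    proof
      fix x assume x: "x \<in> S'"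
      have xS: "x \<in> S" using x S'S by blast
      have xc: "x \<in> carrier_vec n" using subspace_carrier[OF S xS] .
      have "\<forall>j<m. g x \<bullet>c vs j = 0"
      proof (intro allI impI)
        fix j assume j: "j < m"
        obtain d where d: "g (vs j) = complex_of_real d \<cdot>\<^sub>v vs j" using Q j by blast
        have "g x \<bullet>c vs j = x \<bullet>c g (vs j)" using herm_onD(4)[OF g xS] inS j by blast
        also have "\<dots> = complex_of_real d * (x \<bullet>c vs j)" unfolding d using cip_smult_right[OF xc, of "vs j"] vc j by simp
        also have "\<dots> = 0" using x j unfolding S'_def by simp
        finally show "g x \<bullet>c vs j = 0" .
      qed
      thus "g x \<in> S'" unfolding S'_def using herm_onD(1)[OF g xS] by blast
    qed
    have g': "herm_on n S' g" by (rule herm_on_mono[OF g S'S gS'])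
    define r where "r = s - lc n (\<lambda>j. s \<bullet>c vs j) vs m"
    have r: "r \<in> S" "r \<noteq> 0\<^sub>v n" "\<forall>j<m. r \<bullet>c vs j = 0" using residual[OF S on inS s ne] unfolding r_def by auto
    have rS': "r \<in> S'" unfolding S'_def using r by auto
    obtain u d where u: "u \<in> S'" "u \<noteq> 0\<^sub>v n" and ud: "g u = complex_of_real d \<cdot>\<^sub>v u"
      using eigen_exists[OF S' g' rS' r(2)] by blast
    have uS: "u \<in> S" using u S'S by blast
    have uc: "u \<in> carrier_vec n" using subspace_carrier[OF S uS] .
    define w where "w = complex_of_real (1 / sqrt (nsq u)) \<cdot>\<^sub>v u"
    have w1: "w \<bullet>c w = 1" unfolding w_def by (rule normalize_unit[OF uc u(2)])
    have wS': "w \<in> S'" unfolding w_def using subspace_smult[OF S' u(1)] .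
    have wc: "w \<in> carrier_vec n" unfolding w_def using uc by simp
    have "g w = complex_of_real (1 / sqrt (nsq u)) \<cdot>\<^sub>v (complex_of_real d \<cdot>\<^sub>v u)"
      unfolding w_def using herm_onD(3)[OF g uS] ud by simp
    also have "\<dots> = complex_of_real d \<cdot>\<^sub>v w" unfolding w_def using uc by (intro eq_vecI) auto
    finally have gw: "g w = complex_of_real d \<cdot>\<^sub>v w" .
    show "\<exists>u. u \<in> carrier_vec n \<and> (u \<in> S \<and> (\<exists>d::real. g u = complex_of_real d \<cdot>\<^sub>v u)) \<and> u \<bullet>c u = 1
        \<and> (\<forall>j<m. u \<bullet>c vs j = 0)"
      using wc wS' S'S gw w1 unfolding S'_def by blast
  qed
  then obtain vs m where on: "orthonormal n vs m"
    and Q: "\<forall>j<m. vs j \<in> S \<and> (\<exists>d::real. g (vs j) = complex_of_real d \<cdot>\<^sub>v vs j)"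
    and sp: "\<forall>s\<in>S. s = lc n (\<lambda>j. s \<bullet>c vs j) vs m" by blast
  define ds where "ds = (\<lambda>j. SOME d::real. g (vs j) = complex_of_real d \<cdot>\<^sub>v vs j)"
  have "\<forall>j<m. vs j \<in> S \<and> g (vs j) = complex_of_real (ds j) \<cdot>\<^sub>v vs j"
  proof (intro allI impI conjI)
    fix j assume j: "j < m"
    show "vs j \<in> S" using Q j by blast
    have "\<exists>d::real. g (vs j) = complex_of_real d \<cdot>\<^sub>v vs j" using Q j by blast
    from someI_ex[OF this] show "g (vs j) = complex_of_real (ds j) \<cdot>\<^sub>v vs j" unfolding ds_def .
  qed
  thus ?thesis using on sp by blast
qed




lemma mat_adjoint_carrier: "A \<in> carrier_mat n n \<Longrightarrow> mat_adjoint A \<in> carrier_mat n n"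
  unfolding mat_adjoint_def by (auto simp: mat_of_rows_def)

lemma mat_adjoint_index: "A \<in> carrier_mat n n \<Longrightarrow> i < n \<Longrightarrow> j < n \<Longrightarrow>
  mat_adjoint A $$ (i,j) = cnj (A $$ (j,i))"
  unfolding mat_adjoint_def by (auto simp: mat_of_rows_def)

lemma adjoint_cip:
  assumes A: "(A::complex mat) \<in> carrier_mat n n" and v: "v \<in> carrier_vec n" and w: "w \<in> carrier_vec n"
  shows "(A *\<^sub>v v) \<bullet>c w = v \<bullet>c (mat_adjoint A *\<^sub>v w)"
proof -
  have Ah: "mat_adjoint A \<in> carrier_mat n n" using mat_adjoint_carrier[OF A] .
  have "(A *\<^sub>v v) \<bullet>c w = (\<Sum>i<n. (A *\<^sub>v v) $ i * cnj (w $ i))" using A v w by (intro cip_def) auto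
  also have "\<dots> = (\<Sum>i<n. (\<Sum>j<n. A $$ (i,j) * v $ j) * cnj (w $ i))"
    using A v by (intro sum.cong) (auto simp: scalar_prod_def lessThan_atLeast0)
  also have "\<dots> = (\<Sum>i<n. \<Sum>j<n. A $$ (i,j) * v $ j * cnj (w $ i))" by (simp add: sum_distrib_right)
  also have "\<dots> = (\<Sum>j<n. \<Sum>i<n. A $$ (i,j) * v $ j * cnj (w $ i))" by (rule sum.swap)
  also have "\<dots> = (\<Sum>j<n. v $ j * cnj (\<Sum>i<n. mat_adjoint A $$ (j,i) * w $ i))"
    by (intro sum.cong refl) (auto simp: mat_adjoint_index[OF A] sum_distrib_left ac_simps intro!: sum.cong)
  also have "\<dots> = (\<Sum>j<n. v $ j * cnj ((mat_adjoint A *\<^sub>v w) $ j))"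
    using Ah w by (intro sum.cong) (auto simp: scalar_prod_def lessThan_atLeast0)
  also have "\<dots> = v \<bullet>c (mat_adjoint A *\<^sub>v w)" using Ah v w by (intro cip_def[symmetric]) auto
  finally show ?thesis .
qed

lemma H_apply: assumes A: "(A::complex mat) \<in> carrier_mat n n" and v: "v \<in> carrier_vec n"
  shows "(1\<^sub>m n - mat_adjoint A * A) *\<^sub>v v = v - mat_adjoint A *\<^sub>v (A *\<^sub>v v)"
proof -
  have Ah: "mat_adjoint A \<in> carrier_mat n n" using mat_adjoint_carrier[OF A] .
  have "(1\<^sub>m n - mat_adjoint A * A) *\<^sub>v v = 1\<^sub>m n *\<^sub>v v - (mat_adjoint A * A) *\<^sub>v v"
    using A Ah v by (intro minus_mult_distrib_mat_vec) auto
  also have "\<dots> = v - mat_adjoint A *\<^sub>v (A *\<^sub>v v)" using A Ah v by (simp add: assoc_mult_mat_vec)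
  finally show ?thesis .
qed

lemma H_herm: assumes A: "(A::complex mat) \<in> carrier_mat n n" and v: "v \<in> carrier_vec n" and w: "w \<in> carrier_vec n"
  shows "((1\<^sub>m n - mat_adjoint A * A) *\<^sub>v v) \<bullet>c w = v \<bullet>c ((1\<^sub>m n - mat_adjoint A * A) *\<^sub>v w)"
proof -
  have Ah: "mat_adjoint A \<in> carrier_mat n n" using mat_adjoint_carrier[OF A] .
  have Av: "A *\<^sub>v v \<in> carrier_vec n" and Aw: "A *\<^sub>v w \<in> carrier_vec n" using A v w by auto
  have AAv: "mat_adjoint A *\<^sub>v (A *\<^sub>v v) \<in> carrier_vec n" and AAw: "mat_adjoint A *\<^sub>v (A *\<^sub>v w) \<in> carrier_vec n"
    using Ah Av Aw by auto
  have "(mat_adjoint A *\<^sub>v (A *\<^sub>v v)) \<bullet>c w = cnj (w \<bullet>c (mat_adjoint A *\<^sub>v (A *\<^sub>v v)))"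
    using cip_cnj[OF w AAv] by simp
  also have "w \<bullet>c (mat_adjoint A *\<^sub>v (A *\<^sub>v v)) = (A *\<^sub>v w) \<bullet>c (A *\<^sub>v v)"
    using adjoint_cip[OF A w Av] by simp
  also have "cnj ((A *\<^sub>v w) \<bullet>c (A *\<^sub>v v)) = (A *\<^sub>v v) \<bullet>c (A *\<^sub>v w)" using cip_cnj[OF Aw Av] .
  finally have 1: "(mat_adjoint A *\<^sub>v (A *\<^sub>v v)) \<bullet>c w = (A *\<^sub>v v) \<bullet>c (A *\<^sub>v w)" .
  have 2: "v \<bullet>c (mat_adjoint A *\<^sub>v (A *\<^sub>v w)) = (A *\<^sub>v v) \<bullet>c (A *\<^sub>v w)"
    using adjoint_cip[OF A v Aw] by simp
  show ?thesis unfolding H_apply[OF A v] H_apply[OF A w]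
    using cip_minus_left[OF v AAv w] cip_minus_right[OF w AAw v] 1 2 by simp
qed

lemma H_carrier: "A \<in> carrier_mat n n \<Longrightarrow> (1\<^sub>m n - mat_adjoint A * A) \<in> carrier_mat n n"
  using mat_adjoint_carrier[of A n] by auto




lemma vspan_subspace: assumes E: "E \<subseteq> carrier_vec n" shows "is_subspace n (vspan n E)"
proof -
  have cs: "is_subspace n (carrier_vec n)" unfolding is_subspace_def by auto
  have 1: "vspan n E \<subseteq> carrier_vec n" unfolding vspan_def using cs E by blast
  have 2: "0\<^sub>v n \<in> vspan n E" unfolding vspan_def by (auto simp: is_subspace_def)
  have 3: "\<forall>u\<in>vspan n E. \<forall>v\<in>vspan n E. u + v \<in> vspan n E" unfolding vspan_def by (auto simp: is_subspace_def)
  have 4: "\<forall>c. \<forall>u\<in>vspan n E. c \<cdot>\<^sub>v u \<in> vspan n E" unfolding vspan_def by (auto simp: is_subspace_def)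
  show ?thesis unfolding is_subspace_def using 1 2 3 4 by blast
qed

lemma vspan_least: "is_subspace n W \<Longrightarrow> E \<subseteq> W \<Longrightarrow> vspan n E \<subseteq> W"
  unfolding vspan_def by blast

lemma vspan_sup: "E \<subseteq> vspan n E"
  unfolding vspan_def by blast

lemma vnorm_nonneg: "v \<in> carrier_vec n \<Longrightarrow> vnorm v \<ge> 0" using nsq_nonneg[of v n] unfolding vnorm_def nsq_def by simp

lemma nsq_uminus: "v \<in> carrier_vec n \<Longrightarrow> nsq ((-1) \<cdot>\<^sub>v v) = nsq v"
  using nsq_smult[of v n "-1"] by simp

locale setting =
  fixes n :: nat and Z Y :: "complex vec set" and A :: "complex mat" and \<Delta> \<delta> :: real
  assumes Zs: "is_subspace n Z" and ag: "AGSP n \<Delta> Z A" and Dl: "\<Delta> \<le> 1/2" and dp: "\<delta> > 0"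
    and Ys: "is_subspace n Y" and via: "viable \<delta> Y Z"
begin

abbreviation "H \<equiv> 1\<^sub>m n - mat_adjoint A * A"
abbreviation "E \<equiv> {y \<in> Y. \<exists>e::real. 0 \<le> e \<and> e \<le> \<delta> \<and> proj Y (H *\<^sub>v y) = complex_of_real e \<cdot>\<^sub>v y}"
abbreviation "Zt \<equiv> spectral_subspace n Y H 0 \<delta>"

lemma Zt_def: "Zt = vspan n E" unfolding spectral_subspace_def by simp

lemma A: "A \<in> carrier_mat n n" using ag unfolding AGSP_def by blast
lemma Afix: "z \<in> Z \<Longrightarrow> A *\<^sub>v z = z" using ag unfolding AGSP_def by blast
lemma Aperp: "w \<in> orth_compl n Z \<Longrightarrow> A *\<^sub>v w \<in> orth_compl n Z" using ag unfolding AGSP_def by blast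
lemma Anorm: "w \<in> orth_compl n Z \<Longrightarrow> vnorm (A *\<^sub>v w) \<le> sqrt \<Delta> * vnorm w" using ag unfolding AGSP_def by blast
lemma Hc: "H \<in> carrier_mat n n" using H_carrier[OF A] .

lemma Zc: "z \<in> Z \<Longrightarrow> z \<in> carrier_vec n" using subspace_carrier[OF Zs] .
lemma Yc: "y \<in> Y \<Longrightarrow> y \<in> carrier_vec n" using subspace_carrier[OF Ys] .

lemma q_perp: "v \<in> carrier_vec n \<Longrightarrow> v - proj Z v \<in> orth_compl n Z"
  unfolding orth_compl_def using proj_orth[OF Zs] proj_carrier[OF Zs] by auto

lemma perp_cip: "w \<in> orth_compl n Z \<Longrightarrow> y \<in> Z \<Longrightarrow> w \<bullet>c y = 0"
  unfolding orth_compl_def by auto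

lemma perp_cip2: "w \<in> orth_compl n Z \<Longrightarrow> y \<in> Z \<Longrightarrow> y \<bullet>c w = 0"
  using perp_cip[of w y] cip_cnj[of w n y] Zc[of y] unfolding orth_compl_def by auto

lemma perp_carrier: "w \<in> orth_compl n Z \<Longrightarrow> w \<in> carrier_vec n"
  unfolding orth_compl_def by auto

lemma Aq_bound: assumes w: "w \<in> orth_compl n Z" shows "nsq (A *\<^sub>v w) \<le> nsq w / 2"
proof -
  have wc: "w \<in> carrier_vec n" using perp_carrier[OF w] .
  have Awc: "A *\<^sub>v w \<in> carrier_vec n" using A wc by simp
  have b: "vnorm (A *\<^sub>v w) \<le> sqrt \<Delta> * vnorm w" using Anorm[OF w] .
  have nw: "nsq w \<ge> 0" using nsq_nonneg[OF wc] .
  show ?thesis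
  proof (cases "\<Delta> \<ge> 0")
    case True
    have "(vnorm (A *\<^sub>v w))^2 \<le> (sqrt \<Delta> * vnorm w)^2"
      using b vnorm_nonneg[OF Awc] by (intro power_mono) auto
    also have "\<dots> = \<Delta> * nsq w" using True vnorm_sq[OF wc] by (simp add: power_mult_distrib)
    also have "\<dots> \<le> nsq w / 2" using Dl nw by (simp add: mult_right_mono[of \<Delta> "1/2" "nsq w", simplified])
    finally show ?thesis using vnorm_sq[OF Awc] by simp
  next
    case False
    hence "sqrt \<Delta> * vnorm w \<le> 0" using vnorm_nonneg[OF wc] by (simp add: mult_nonpos_nonneg)
    hence "vnorm (A *\<^sub>v w) = 0" using b vnorm_nonneg[OF Awc] by linarith
    hence "nsq (A *\<^sub>v w) = 0" using vnorm_sq[OF Awc] by simp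
    thus ?thesis using nw by simp
  qed
qed

lemma decomp: assumes v: "v \<in> carrier_vec n"
  shows "A *\<^sub>v v = proj Z v + A *\<^sub>v (v - proj Z v)"
proof -
  have pc: "proj Z v \<in> carrier_vec n" using proj_carrier[OF Zs v] .
  have "v = proj Z v + (v - proj Z v)" using pc v by (intro eq_vecI) auto
  hence "A *\<^sub>v v = A *\<^sub>v (proj Z v + (v - proj Z v))" by simp
  also have "\<dots> = A *\<^sub>v proj Z v + A *\<^sub>v (v - proj Z v)" using A pc v by (intro mult_add_distrib_mat_vec) auto
  also have "A *\<^sub>v proj Z v = proj Z v" using Afix[OF proj_in[OF Zs v]] .
  finally show ?thesis .
qed

lemma ray: assumes v: "v \<in> carrier_vec n"
  shows "Re (v \<bullet>c (H *\<^sub>v v)) = nsq (v - proj Z v) - nsq (A *\<^sub>v (v - proj Z v))"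
proof -
  have Ah: "mat_adjoint A \<in> carrier_mat n n" using mat_adjoint_carrier[OF A] .
  have Av: "A *\<^sub>v v \<in> carrier_vec n" using A v by simp
  have AAv: "mat_adjoint A *\<^sub>v (A *\<^sub>v v) \<in> carrier_vec n" using Ah Av by simp
  have "v \<bullet>c (H *\<^sub>v v) = v \<bullet>c v - v \<bullet>c (mat_adjoint A *\<^sub>v (A *\<^sub>v v))"
    unfolding H_apply[OF A v] using cip_minus_right[OF v AAv v] .
  also have "v \<bullet>c (mat_adjoint A *\<^sub>v (A *\<^sub>v v)) = (A *\<^sub>v v) \<bullet>c (A *\<^sub>v v)" using adjoint_cip[OF A v Av] by simp
  finally have 1: "Re (v \<bullet>c (H *\<^sub>v v)) = nsq v - nsq (A *\<^sub>v v)" unfolding nsq_def by simp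
  define p where "p = proj Z v"
  define q where "q = v - proj Z v"
  have pZ: "p \<in> Z" unfolding p_def using proj_in[OF Zs v] .
  have pc: "p \<in> carrier_vec n" using Zc[OF pZ] .
  have qp: "q \<in> orth_compl n Z" unfolding q_def using q_perp[OF v] .
  have Aqp: "A *\<^sub>v q \<in> orth_compl n Z" using Aperp[OF qp] .
  have Aqc: "A *\<^sub>v q \<in> carrier_vec n" using perp_carrier[OF Aqp] .
  have "nsq (A *\<^sub>v v) = nsq (p + A *\<^sub>v q)" using decomp[OF v] unfolding p_def q_def by simp
  also have "\<dots> = nsq p + nsq (A *\<^sub>v q)" using nsq_add_orth[OF pc Aqc perp_cip2[OF Aqp pZ]] .
  finally have 2: "nsq (A *\<^sub>v v) = nsq p + nsq (A *\<^sub>v q)" .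
  have 3: "nsq v = nsq p + nsq q" unfolding p_def q_def using pythag[OF Zs v] .
  show ?thesis using 1 2 3 unfolding q_def by simp
qed

lemma ray_lower: "v \<in> carrier_vec n \<Longrightarrow> nsq (v - proj Z v) \<le> 2 * Re (v \<bullet>c (H *\<^sub>v v))"
  using ray[of v] Aq_bound[OF q_perp[of v]] by simp

lemma ray_upper: "v \<in> carrier_vec n \<Longrightarrow> Re (v \<bullet>c (H *\<^sub>v v)) \<le> nsq (v - proj Z v)"
  using ray[of v] nsq_nonneg[of "A *\<^sub>v (v - proj Z v)" n] A proj_carrier[OF Zs, of v] by simp

lemma ray_nonneg: "v \<in> carrier_vec n \<Longrightarrow> 0 \<le> Re (v \<bullet>c (H *\<^sub>v v))"
  using ray_lower[of v] nsq_nonneg[of "v - proj Z v" n] proj_carrier[OF Zs, of v] by simp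

lemma adj_fix: assumes z: "z \<in> Z" shows "mat_adjoint A *\<^sub>v z = z"
proof -
  have zc: "z \<in> carrier_vec n" using Zc[OF z] .
  have Ah: "mat_adjoint A \<in> carrier_mat n n" using mat_adjoint_carrier[OF A] .
  define d where "d = mat_adjoint A *\<^sub>v z - z"
  have dc: "d \<in> carrier_vec n" unfolding d_def using Ah zc by simp
  have key: "\<And>w::complex vec. w \<in> carrier_vec n \<Longrightarrow> w \<bullet>c d = 0"
  proof -
    fix w :: "complex vec" assume w: "w \<in> carrier_vec n"
    have qp: "w - proj Z w \<in> orth_compl n Z" using q_perp[OF w] .
    have pc: "proj Z w \<in> carrier_vec n" using proj_carrier[OF Zs w] .
    have Aqc: "A *\<^sub>v (w - proj Z w) \<in> carrier_vec n" using A w pc by simp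
    have "w \<bullet>c (mat_adjoint A *\<^sub>v z) = (A *\<^sub>v w) \<bullet>c z" using adjoint_cip[OF A w zc] by simp
    also have "\<dots> = proj Z w \<bullet>c z + (A *\<^sub>v (w - proj Z w)) \<bullet>c z"
      unfolding decomp[OF w] using cip_add_left[OF pc Aqc zc] .
    also have "(A *\<^sub>v (w - proj Z w)) \<bullet>c z = 0" using perp_cip[OF Aperp[OF qp] z] .
    also have "proj Z w \<bullet>c z = w \<bullet>c z" using proj_cip[OF Zs w z] by simp
    finally have "w \<bullet>c (mat_adjoint A *\<^sub>v z) = w \<bullet>c z" by simp
    thus "w \<bullet>c d = 0" unfolding d_def using cip_minus_right[of "mat_adjoint A *\<^sub>v z" n z w] Ah zc w by simp
  qed
  have "d = 0\<^sub>v n" using cip_eq_0_imp[OF dc key[OF dc]] .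
  thus ?thesis unfolding d_def using Ah zc by (metis vec_minus_add_cancel left_zero_vec mult_mat_vec_carrier)
qed

lemma Hz: assumes z: "z \<in> Z" shows "H *\<^sub>v z = 0\<^sub>v n"
proof -
  have zc: "z \<in> carrier_vec n" using Zc[OF z] .
  have "H *\<^sub>v z = z - mat_adjoint A *\<^sub>v (A *\<^sub>v z)" using H_apply[OF A zc] .
  also have "\<dots> = z - z" using Afix[OF z] adj_fix[OF z] by simp
  also have "\<dots> = 0\<^sub>v n" using zc by (intro eq_vecI) auto
  finally show ?thesis .
qed

lemma Kherm: "herm_on n Y (\<lambda>y. proj Y (H *\<^sub>v y))"
  unfolding herm_on_def
proof (intro conjI ballI allI)
  fix s assume s: "s \<in> Y"
  have sc: "s \<in> carrier_vec n" using Yc[OF s] .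
  have Hsc: "H *\<^sub>v s \<in> carrier_vec n" using Hc sc by simp
  show "proj Y (H *\<^sub>v s) \<in> Y" using proj_in[OF Ys Hsc] .
  fix c show "proj Y (H *\<^sub>v (c \<cdot>\<^sub>v s)) = c \<cdot>\<^sub>v proj Y (H *\<^sub>v s)"
    using proj_smult[OF Ys Hsc] mult_mat_vec[OF Hc sc] by simp
next
  fix s t assume s: "s \<in> Y" and t: "t \<in> Y"
  have sc: "s \<in> carrier_vec n" using Yc[OF s] .
  have tc: "t \<in> carrier_vec n" using Yc[OF t] .
  have Hsc: "H *\<^sub>v s \<in> carrier_vec n" using Hc sc by simp
  have Htc: "H *\<^sub>v t \<in> carrier_vec n" using Hc tc by simp
  show "proj Y (H *\<^sub>v (s + t)) = proj Y (H *\<^sub>v s) + proj Y (H *\<^sub>v t)"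
    using proj_add[OF Ys Hsc Htc] mult_add_distrib_mat_vec[OF Hc sc tc] by simp
  have "proj Y (H *\<^sub>v s) \<bullet>c t = (H *\<^sub>v s) \<bullet>c t" using proj_cip[OF Ys Hsc t] by simp
  also have "\<dots> = s \<bullet>c (H *\<^sub>v t)" using H_herm[OF A sc tc] .
  also have "\<dots> = cnj ((H *\<^sub>v t) \<bullet>c s)" using cip_cnj[OF Htc sc] by simp
  also have "(H *\<^sub>v t) \<bullet>c s = proj Y (H *\<^sub>v t) \<bullet>c s" using proj_cip[OF Ys Htc s] .
  also have "cnj (proj Y (H *\<^sub>v t) \<bullet>c s) = s \<bullet>c proj Y (H *\<^sub>v t)"
    using cip_cnj[OF proj_carrier[OF Ys Htc] sc] .
  finally show "proj Y (H *\<^sub>v s) \<bullet>c t = s \<bullet>c proj Y (H *\<^sub>v t)" .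
qed

lemma Kray: assumes s: "s \<in> Y" shows "s \<bullet>c proj Y (H *\<^sub>v s) = s \<bullet>c (H *\<^sub>v s)"
proof -
  have sc: "s \<in> carrier_vec n" using Yc[OF s] .
  have Hsc: "H *\<^sub>v s \<in> carrier_vec n" using Hc sc by simp
  have "s \<bullet>c proj Y (H *\<^sub>v s) = cnj (proj Y (H *\<^sub>v s) \<bullet>c s)"
    using cip_cnj[OF proj_carrier[OF Ys Hsc] sc] by simp
  also have "proj Y (H *\<^sub>v s) \<bullet>c s = (H *\<^sub>v s) \<bullet>c s" using proj_cip[OF Ys Hsc s] by simp
  also have "cnj ((H *\<^sub>v s) \<bullet>c s) = s \<bullet>c (H *\<^sub>v s)" using cip_cnj[OF Hsc sc] .
  finally show ?thesis .
qed

lemma E_carrier: "E \<subseteq> carrier_vec n" using Yc by blast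
lemma Zt_subspace: "is_subspace n Zt" unfolding Zt_def using vspan_subspace[OF E_carrier] .
lemma Zt_Y: "Zt \<subseteq> Y" unfolding Zt_def by (rule vspan_least[OF Ys]) blast
lemma E_Zt: "E \<subseteq> Zt" unfolding Zt_def by (rule vspan_sup)

end



lemma lc_cong_vs: "(\<And>j. j < m \<Longrightarrow> vs j = ws j) \<Longrightarrow> lc n c vs m = lc n c ws m"
  unfolding lc_def by (intro eq_vecI) (auto intro!: sum.cong)

lemma lc_scale: "(\<forall>j<m. vs j \<in> carrier_vec n) \<Longrightarrow>
  lc n c (\<lambda>j. d j \<cdot>\<^sub>v vs j) m = lc n (\<lambda>j. c j * d j) vs m"
  unfolding lc_def by (intro eq_vecI) (auto simp: ac_simps intro!: sum.cong)

lemma term_calc: "c * cnj (c * complex_of_real d) = complex_of_real (d * (cmod c)^2)"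
proof -
  have "c * cnj c = complex_of_real ((cmod c)^2)" by (rule complex_norm_square[symmetric])
  hence "c * cnj (c * complex_of_real d) = complex_of_real ((cmod c)^2) * complex_of_real d" by simp
  thus ?thesis by (simp add: mult.commute)
qed

context setting begin

lemma ab:
  shows "(\<forall>v\<in>Zt. Re (v \<bullet>c (H *\<^sub>v v)) \<le> \<delta> * nsq v) \<and>
         (\<forall>y\<in>Y. (\<forall>u\<in>Zt. y \<bullet>c u = 0) \<longrightarrow> Re (y \<bullet>c (H *\<^sub>v y)) \<le> \<delta> * nsq y \<longrightarrow> y = 0\<^sub>v n)"
proof -
  obtain us m ds where on: "orthonormal n us m"
    and eig: "\<forall>j<m. us j \<in> Y \<and> proj Y (H *\<^sub>v us j) = complex_of_real (ds j) \<cdot>\<^sub>v us j"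
    and sp: "\<forall>s\<in>Y. s = lc n (\<lambda>j. s \<bullet>c us j) us m"
    using eigenbasis[OF Ys Kherm] by blast
  have usY: "\<forall>j<m. us j \<in> Y" using eig by blast
  have usc: "\<forall>j<m. us j \<in> carrier_vec n" using on orthonormal_carrier by blast
  have expand: "Re (v \<bullet>c (H *\<^sub>v v)) = (\<Sum>j<m. ds j * (cmod (v \<bullet>c us j))^2) \<and>
       nsq v = (\<Sum>j<m. (cmod (v \<bullet>c us j))^2)" if v: "v \<in> Y" for v
  proof -
    define c where "c = (\<lambda>j. v \<bullet>c us j)"
    have vlc: "v = lc n c us m" using sp v unfolding c_def by blast
    have "proj Y (H *\<^sub>v v) = proj Y (H *\<^sub>v lc n c us m)" using vlc by (rule arg_cong)
    also have "\<dots> = lc n c (\<lambda>j. proj Y (H *\<^sub>v us j)) m" by (rule g_lc[OF Ys Kherm usY])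
    also have "\<dots> = lc n c (\<lambda>j. complex_of_real (ds j) \<cdot>\<^sub>v us j) m" using eig by (intro lc_cong_vs) auto
    also have "\<dots> = lc n (\<lambda>j. c j * complex_of_real (ds j)) us m" using lc_scale[OF usc] .
    finally have Kv: "proj Y (H *\<^sub>v v) = lc n (\<lambda>j. c j * complex_of_real (ds j)) us m" .
    have "v \<bullet>c (H *\<^sub>v v) = v \<bullet>c proj Y (H *\<^sub>v v)" using Kray[OF v] by simp
    also have "\<dots> = lc n c us m \<bullet>c lc n (\<lambda>j. c j * complex_of_real (ds j)) us m"
      unfolding Kv using vlc by (rule arg_cong)
    also have "\<dots> = (\<Sum>j<m. c j * cnj (c j * complex_of_real (ds j)))" using lc_self_cip[OF on] .
    also have "\<dots> = (\<Sum>j<m. complex_of_real (ds j * (cmod (c j))^2))" by (rule sum.cong[OF refl term_calc])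
    finally have 1: "Re (v \<bullet>c (H *\<^sub>v v)) = (\<Sum>j<m. ds j * (cmod (c j))^2)" by (simp add: Re_sum)
    have "v \<bullet>c v = lc n c us m \<bullet>c lc n c us m" using vlc by simp
    also have "\<dots> = (\<Sum>j<m. c j * cnj (c j))" using lc_self_cip[OF on] .
    also have "\<dots> = (\<Sum>j<m. complex_of_real ((cmod (c j))^2))" by (rule sum.cong[OF refl complex_norm_square[symmetric]])
    finally have 2: "nsq v = (\<Sum>j<m. (cmod (c j))^2)" unfolding nsq_def by (simp add: Re_sum)
    show ?thesis using 1 2 unfolding c_def by simp
  qed
  have ds_nonneg: "0 \<le> ds j" if j: "j < m" for j
  proof -
    have uY: "us j \<in> Y" using usY j by blast
    have uc: "us j \<in> carrier_vec n" using usc j by blast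
    have "us j \<bullet>c (H *\<^sub>v us j) = us j \<bullet>c proj Y (H *\<^sub>v us j)" using Kray[OF uY] by simp
    also have "\<dots> = us j \<bullet>c (complex_of_real (ds j) \<cdot>\<^sub>v us j)" using eig j by simp
    also have "\<dots> = complex_of_real (ds j) * (us j \<bullet>c us j)" using cip_smult_right[OF uc uc] by simp
    also have "us j \<bullet>c us j = 1" using on j by (simp add: orthonormal_def)
    finally have "Re (us j \<bullet>c (H *\<^sub>v us j)) = ds j" by simp
    thus ?thesis using ray_nonneg[OF uc] by simp
  qed
  define Lo where "Lo = {x \<in> Y. \<forall>j<m. \<delta> < ds j \<longrightarrow> x \<bullet>c us j = 0}"
  have Lo: "is_subspace n Lo"
    unfolding is_subspace_def
  proof (intro conjI ballI allI)
    show "Lo \<subseteq> carrier_vec n" unfolding Lo_def using Yc by blast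
    show "0\<^sub>v n \<in> Lo" unfolding Lo_def using subspace_zero[OF Ys] usc cip_zero_left by auto
  next
    fix u v assume u: "u \<in> Lo" and v: "v \<in> Lo"
    show "u + v \<in> Lo" using u v subspace_add[OF Ys] usc Yc cip_add_left[of u n v] unfolding Lo_def by auto
  next
    fix c u assume u: "u \<in> Lo"
    show "c \<cdot>\<^sub>v u \<in> Lo" using u subspace_smult[OF Ys] usc Yc cip_smult_left[of u n] unfolding Lo_def by auto
  qed
  have ELo: "E \<subseteq> Lo"
  proof
    fix y assume y: "y \<in> E"
    then obtain e where e: "0 \<le> e" "e \<le> \<delta>" "proj Y (H *\<^sub>v y) = complex_of_real e \<cdot>\<^sub>v y" and yY: "y \<in> Y" by blast
    have yc: "y \<in> carrier_vec n" using Yc[OF yY] .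
    have "\<forall>j<m. \<delta> < ds j \<longrightarrow> y \<bullet>c us j = 0"
    proof (intro allI impI)
      fix j assume j: "j < m" and dj: "\<delta> < ds j"
      have uc: "us j \<in> carrier_vec n" using usc j by blast
      have "proj Y (H *\<^sub>v y) \<bullet>c us j = complex_of_real e * (y \<bullet>c us j)"
        unfolding e(3) using cip_smult_left[OF yc uc] .
      moreover have "proj Y (H *\<^sub>v y) \<bullet>c us j = y \<bullet>c proj Y (H *\<^sub>v us j)"
        using herm_onD(4)[OF Kherm yY] usY j by blast
      moreover have "y \<bullet>c proj Y (H *\<^sub>v us j) = complex_of_real (ds j) * (y \<bullet>c us j)"
        using eig j cip_smult_right[OF yc uc] by simp
      ultimately have "(complex_of_real (ds j) - complex_of_real e) * (y \<bullet>c us j) = 0"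
        by (simp add: algebra_simps)
      moreover have "complex_of_real (ds j) - complex_of_real e \<noteq> 0" using dj e(2) by simp
      ultimately show "y \<bullet>c us j = 0" by simp
    qed
    thus "y \<in> Lo" unfolding Lo_def using yY by blast
  qed
  have ZtLo: "Zt \<subseteq> Lo" unfolding Zt_def by (rule vspan_least[OF Lo ELo])
  have a: "\<forall>v\<in>Zt. Re (v \<bullet>c (H *\<^sub>v v)) \<le> \<delta> * nsq v"
  proof
    fix v assume v: "v \<in> Zt"
    have vLo: "v \<in> Lo" using ZtLo v by blast
    hence vY: "v \<in> Y" unfolding Lo_def by blast
    have "(\<Sum>j<m. ds j * (cmod (v \<bullet>c us j))^2) \<le> (\<Sum>j<m. \<delta> * (cmod (v \<bullet>c us j))^2)"
    proof (intro sum_mono)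
      fix j assume j: "j \<in> {..<m}"
      show "ds j * (cmod (v \<bullet>c us j))^2 \<le> \<delta> * (cmod (v \<bullet>c us j))^2"
      proof (cases "\<delta> < ds j")
        case True hence "v \<bullet>c us j = 0" using vLo j unfolding Lo_def by blast
        thus ?thesis by simp
      next
        case False thus ?thesis by (intro mult_right_mono) auto
      qed
    qed
    also have "\<dots> = \<delta> * (\<Sum>j<m. (cmod (v \<bullet>c us j))^2)" by (simp add: sum_distrib_left)
    finally show "Re (v \<bullet>c (H *\<^sub>v v)) \<le> \<delta> * nsq v" using expand[OF vY] by simp
  qed
  have b: "\<forall>y\<in>Y. (\<forall>u\<in>Zt. y \<bullet>c u = 0) \<longrightarrow> Re (y \<bullet>c (H *\<^sub>v y)) \<le> \<delta> * nsq y \<longrightarrow> y = 0\<^sub>v n"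
  proof (intro ballI impI)
    fix y assume yY: "y \<in> Y" and orth: "\<forall>u\<in>Zt. y \<bullet>c u = 0" and le: "Re (y \<bullet>c (H *\<^sub>v y)) \<le> \<delta> * nsq y"
    have yc: "y \<in> carrier_vec n" using Yc[OF yY] .
    have low0: "y \<bullet>c us j = 0" if j: "j < m" and dj: "ds j \<le> \<delta>" for j
    proof -
      have "us j \<in> E" using eig j ds_nonneg[OF j] dj by blast
      hence "us j \<in> Zt" using E_Zt by blast
      thus ?thesis using orth by blast
    qed
    define x where "x = (\<lambda>j. (cmod (y \<bullet>c us j))^2)"
    have "(\<Sum>j<m. ds j * x j) \<le> \<delta> * (\<Sum>j<m. x j)" using expand[OF yY] le unfolding x_def by simp
    hence "(\<Sum>j<m. (ds j - \<delta>) * x j) \<le> 0"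
      by (simp add: algebra_simps sum_subtractf sum_distrib_left)
    moreover have tnn: "\<forall>j\<in>{..<m}. 0 \<le> (ds j - \<delta>) * x j"
    proof
      fix j assume j: "j \<in> {..<m}"
      show "0 \<le> (ds j - \<delta>) * x j"
      proof (cases "ds j \<le> \<delta>")
        case True thus ?thesis using low0 j unfolding x_def by simp
      next
        case False thus ?thesis unfolding x_def by simp
      qed
    qed
    ultimately have "(\<Sum>j<m. (ds j - \<delta>) * x j) = 0" proof -
      have "0 \<le> (\<Sum>j<m. (ds j - \<delta>) * x j)" using tnn by (intro sum_nonneg) auto
      thus ?thesis using \<open>(\<Sum>j<m. (ds j - \<delta>) * x j) \<le> 0\<close> by linarith
    qed
    hence z: "\<forall>j\<in>{..<m}. (ds j - \<delta>) * x j = 0" using sum_nonneg_eq_0_iff[of "{..<m}" "\<lambda>j. (ds j - \<delta>) * x j"] tnn by simp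
    have "\<forall>j<m. x j = 0"
    proof (intro allI impI)
      fix j assume j: "j < m"
      show "x j = 0"
      proof (cases "ds j \<le> \<delta>")
        case True thus ?thesis using low0 j unfolding x_def by simp
      next
        case False
        have "ds j = \<delta> \<or> x j = 0" using z j by simp
        thus ?thesis using False by auto
      qed
    qed
    hence "nsq y = 0" using expand[OF yY] unfolding x_def by simp
    thus "y = 0\<^sub>v n" using nsq_eq_0[OF yc] by simp
  qed
  show ?thesis using a b by blast
qed

end



context setting begin

lemma dir1: assumes u: "u \<in> Zt" shows "(1 - 2*\<delta>) * nsq u \<le> nsq (proj Z u)"
proof -
  have uY: "u \<in> Y" using Zt_Y u by blast
  have uc: "u \<in> carrier_vec n" using Yc[OF uY] .
  have 1: "nsq u = nsq (proj Z u) + nsq (u - proj Z u)" using pythag[OF Zs uc] .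
  have 2: "nsq (u - proj Z u) \<le> 2 * Re (u \<bullet>c (H *\<^sub>v u))" using ray_lower[OF uc] .
  have 3: "Re (u \<bullet>c (H *\<^sub>v u)) \<le> \<delta> * nsq u" using ab u by blast
  have 4: "(1 - 2*\<delta>) * nsq u = nsq u - 2 * (\<delta> * nsq u)" by (simp add: algebra_simps)
  show ?thesis using 1 2 3 4 by linarith
qed

lemma viable_hom: assumes z: "z \<in> Z" shows "(1 - \<delta>) * nsq z \<le> nsq (proj Y z)"
proof (cases "z = 0\<^sub>v n")
  case True
  have zc: "z \<in> carrier_vec n" using Zc[OF z] .
  have "nsq z = 0" using nsq_eq_0[OF zc] True by simp
  moreover have "0 \<le> nsq (proj Y z)" using nsq_nonneg[OF proj_carrier[OF Ys zc]] .
  ultimately show ?thesis by simp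
next
  case False
  have zc: "z \<in> carrier_vec n" using Zc[OF z] .
  define N where "N = nsq z"
  have N: "N > 0" using nsq_nonneg[OF zc] nsq_eq_0[OF zc] False unfolding N_def by linarith
  define k where "k = complex_of_real (1 / sqrt N)"
  define z' where "z' = k \<cdot>\<^sub>v z"
  have z'Z: "z' \<in> Z" unfolding z'_def using subspace_smult[OF Zs z] .
  have z'c: "z' \<in> carrier_vec n" unfolding z'_def using zc by simp
  have "z' \<bullet>c z' = 1" unfolding z'_def k_def N_def by (rule normalize_unit[OF zc False])
  hence "vnorm z' = 1" unfolding vnorm_def by simp
  hence "1 - \<delta> \<le> (vnorm (proj Y z'))\<^sup>2" using via z'Z unfolding viable_def by blast
  also have "(vnorm (proj Y z'))\<^sup>2 = nsq (proj Y z')" using vnorm_sq[OF proj_carrier[OF Ys z'c]] .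
  also have "proj Y z' = k \<cdot>\<^sub>v proj Y z" unfolding z'_def using proj_smult[OF Ys zc] .
  also have "nsq (k \<cdot>\<^sub>v proj Y z) = (cmod k)^2 * nsq (proj Y z)" using nsq_smult[OF proj_carrier[OF Ys zc]] .
  also have "(cmod k)^2 = 1 / N"
  proof -
    have "cmod k = 1 / sqrt N" unfolding k_def norm_of_real using N by simp
    thus ?thesis using N by (simp add: power_divide)
  qed
  finally have "1 - \<delta> \<le> nsq (proj Y z) / N" by simp
  thus ?thesis using N unfolding N_def by (simp add: pos_le_divide_eq)
qed

lemma L_R: assumes z: "z \<in> Z"
  shows "Re (proj Y z \<bullet>c (H *\<^sub>v proj Y z)) \<le> \<delta> * nsq (proj Y z)"
proof -
  have zc: "z \<in> carrier_vec n" using Zc[OF z] .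
  define y where "y = proj Y z"
  have yY: "y \<in> Y" unfolding y_def using proj_in[OF Ys zc] .
  have yc: "y \<in> carrier_vec n" using Yc[OF yY] .
  define w where "w = z - y"
  have wc: "w \<in> carrier_vec n" unfolding w_def using zc yc by simp
  have Hyc: "H *\<^sub>v y \<in> carrier_vec n" and Hwc: "H *\<^sub>v w \<in> carrier_vec n" using Hc yc wc by auto
  have zyw: "z = y + w" unfolding w_def using zc yc by (intro eq_vecI) auto
  have yw: "y = z - w" unfolding w_def using zc yc by (intro eq_vecI) auto
  have "H *\<^sub>v y = H *\<^sub>v z - H *\<^sub>v w" unfolding yw by (rule mult_minus_distrib_mat_vec[OF Hc zc wc])
  also have "\<dots> = 0\<^sub>v n - H *\<^sub>v w" using Hz[OF z] by simp
  also have "\<dots> = (-1) \<cdot>\<^sub>v (H *\<^sub>v w)" using Hwc by (intro eq_vecI) auto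
  finally have Hy: "H *\<^sub>v y = (-1) \<cdot>\<^sub>v (H *\<^sub>v w)" .
  have zHw: "z \<bullet>c (H *\<^sub>v w) = 0"
    using H_herm[OF A zc wc] Hz[OF z] cip_zero_left[OF wc] by simp
  have "y \<bullet>c (H *\<^sub>v w) = z \<bullet>c (H *\<^sub>v w) - w \<bullet>c (H *\<^sub>v w)"
    using cip_minus_left[OF zc wc Hwc] yw by simp
  hence 1: "y \<bullet>c (H *\<^sub>v y) = w \<bullet>c (H *\<^sub>v w)"
    unfolding Hy using cip_smult_right[OF yc Hwc, of "-1"] zHw by simp
  have 2: "Re (w \<bullet>c (H *\<^sub>v w)) \<le> nsq (w - proj Z w)" using ray_upper[OF wc] .
  have pZy: "proj Z y \<in> carrier_vec n" using proj_carrier[OF Zs yc] .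
  have "proj Z w = z - proj Z y" unfolding w_def using proj_minus[OF Zs zc yc] proj_id[OF Zs z] by simp
  hence "w - proj Z w = (-1) \<cdot>\<^sub>v (y - proj Z y)" unfolding w_def using zc yc pZy by (intro eq_vecI) auto
  hence 3: "nsq (w - proj Z w) = nsq (y - proj Z y)" using nsq_uminus[of "y - proj Z y" n] yc pZy by simp
  have 4: "nsq y = nsq (proj Z y) + nsq (y - proj Z y)" using pythag[OF Zs yc] .
  have 5: "(1 - \<delta>) * nsq y \<le> nsq (proj Z y)"
  proof -
    have "y \<bullet>c w = cnj (w \<bullet>c y)" using cip_cnj[OF wc yc] by simp
    also have "w \<bullet>c y = 0" unfolding w_def y_def using proj_orth[OF Ys zc] yY unfolding y_def by blast
    finally have yw0: "y \<bullet>c w = 0" by simp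
    have "y \<bullet>c z = y \<bullet>c y + y \<bullet>c w" using zyw cip_add_right[OF yc wc yc] by simp
    hence yz: "y \<bullet>c z = complex_of_real (nsq y)" using yw0 cip_self[OF yc] by simp
    have "y \<bullet>c z = proj Z y \<bullet>c z" using proj_cip[OF Zs yc z] .
    hence "(cmod (complex_of_real (nsq y)))^2 \<le> nsq (proj Z y) * nsq z"
      using cauchy_schwarz[OF pZy zc] yz by simp
    hence cs: "nsq y * nsq y \<le> nsq (proj Z y) * nsq z" by (simp add: power2_eq_square)
    have vh: "(1 - \<delta>) * nsq z \<le> nsq y" using viable_hom[OF z] unfolding y_def .
    have ny: "0 \<le> nsq y" using nsq_nonneg[OF yc] .
    have nz: "0 \<le> nsq z" using nsq_nonneg[OF zc] .
    have np: "0 \<le> nsq (proj Z y)" using nsq_nonneg[OF pZy] .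
    show ?thesis
    proof (cases "nsq z = 0")
      case True
      hence "z = 0\<^sub>v n" using nsq_eq_0[OF zc] by simp
      hence "y = 0\<^sub>v n" unfolding y_def using proj_id[OF Ys subspace_zero[OF Ys]] by simp
      hence "nsq y = 0" using nsq_eq_0[OF yc] by simp
      thus ?thesis using np by simp
    next
      case False
      hence nz': "0 < nsq z" using nz by simp
      have "(1 - \<delta>) * nsq y * nsq z = nsq y * ((1 - \<delta>) * nsq z)" by (simp add: algebra_simps)
      also have "\<dots> \<le> nsq y * nsq y" using vh ny by (intro mult_left_mono) auto
      also have "\<dots> \<le> nsq (proj Z y) * nsq z" using cs .
      finally show ?thesis using nz' by (simp add: mult_le_cancel_right_pos)
    qed
  qed
  have "Re (y \<bullet>c (H *\<^sub>v y)) \<le> \<delta> * nsq y"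
  proof -
    have "Re (y \<bullet>c (H *\<^sub>v y)) \<le> nsq y - nsq (proj Z y)" using 1 2 3 4 by simp
    also have "\<dots> \<le> nsq y - (1 - \<delta>) * nsq y" using 5 by simp
    also have "\<dots> = \<delta> * nsq y" by (simp add: algebra_simps)
    finally show ?thesis .
  qed
  thus ?thesis unfolding y_def .
qed

lemma claimC: assumes d1: "\<delta> < 1" and z: "z \<in> Z" and orth: "\<forall>u\<in>Zt. z \<bullet>c u = 0"
  shows "z = 0\<^sub>v n"
proof -
  have zc: "z \<in> carrier_vec n" using Zc[OF z] .
  define y where "y = proj Y z"
  have yY: "y \<in> Y" unfolding y_def using proj_in[OF Ys zc] .
  have yc: "y \<in> carrier_vec n" using Yc[OF yY] .
  have "\<forall>u\<in>Zt. y \<bullet>c u = 0"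
  proof
    fix u assume u: "u \<in> Zt"
    have uY: "u \<in> Y" using Zt_Y u by blast
    have "y \<bullet>c u = z \<bullet>c u" unfolding y_def using proj_cip[OF Ys zc uY] by simp
    thus "y \<bullet>c u = 0" using orth u by simp
  qed
  moreover have "Re (y \<bullet>c (H *\<^sub>v y)) \<le> \<delta> * nsq y" unfolding y_def using L_R[OF z] .
  ultimately have "y = 0\<^sub>v n" using ab yY by blast
  hence "nsq y = 0" using nsq_eq_0[OF yc] by simp
  hence "(1 - \<delta>) * nsq z \<le> 0" using viable_hom[OF z] unfolding y_def by simp
  hence "nsq z \<le> 0" using d1 by (simp add: mult_le_0_iff)
  hence "nsq z = 0" using nsq_nonneg[OF zc] by simp
  thus ?thesis using nsq_eq_0[OF zc] by simp
qed

lemma dir2: assumes d: "\<delta> < 1/2" and z: "z \<in> Z" and nz: "nsq z = 1"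
  shows "1 - 2*\<delta> \<le> nsq (proj Zt z)"
proof -
  have zc: "z \<in> carrier_vec n" using Zc[OF z] .
  have Zts: "is_subspace n Zt" using Zt_subspace .
  have Ztc: "\<And>u. u \<in> Zt \<Longrightarrow> u \<in> carrier_vec n" using Zt_Y Yc by blast
  define R where "R = (\<lambda>u. proj Z u) ` Zt"
  have Rs: "is_subspace n R"
    unfolding is_subspace_def
  proof (intro conjI ballI allI)
    show "R \<subseteq> carrier_vec n" unfolding R_def using proj_carrier[OF Zs] Ztc by blast
    have "proj Z (0\<^sub>v n) = 0\<^sub>v n" using proj_id[OF Zs subspace_zero[OF Zs]] .
    thus "0\<^sub>v n \<in> R" unfolding R_def using subspace_zero[OF Zts] by (metis image_eqI)
  next
    fix a b assume a: "a \<in> R" and b: "b \<in> R"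
    then obtain u1 u2 where u: "u1 \<in> Zt" "u2 \<in> Zt" "a = proj Z u1" "b = proj Z u2" unfolding R_def by blast
    have "a + b = proj Z (u1 + u2)" using proj_add[OF Zs Ztc[OF u(1)] Ztc[OF u(2)]] u by simp
    moreover have "u1 + u2 \<in> Zt" using subspace_add[OF Zts u(1) u(2)] .
    ultimately show "a + b \<in> R" unfolding R_def by blast
  next
    fix c a assume a: "a \<in> R"
    then obtain u1 where u: "u1 \<in> Zt" "a = proj Z u1" unfolding R_def by blast
    have "c \<cdot>\<^sub>v a = proj Z (c \<cdot>\<^sub>v u1)" using proj_smult[OF Zs Ztc[OF u(1)]] u by simp
    moreover have "c \<cdot>\<^sub>v u1 \<in> Zt" using subspace_smult[OF Zts u(1)] .
    ultimately show "c \<cdot>\<^sub>v a \<in> R" unfolding R_def by blast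
  qed
  have RZ: "R \<subseteq> Z" unfolding R_def using proj_in[OF Zs] Ztc by blast
  define pr where "pr = proj R z"
  have prR: "pr \<in> R" unfolding pr_def using proj_in[OF Rs zc] .
  have prc: "pr \<in> carrier_vec n" using subspace_carrier[OF Rs prR] .
  define z2 where "z2 = z - pr"
  have z2Z: "z2 \<in> Z" unfolding z2_def using subspace_minus[OF Zs z] RZ prR by blast
  have z2c: "z2 \<in> carrier_vec n" using Zc[OF z2Z] .
  have "\<forall>u\<in>Zt. z2 \<bullet>c u = 0"
  proof
    fix u assume u: "u \<in> Zt"
    have uc: "u \<in> carrier_vec n" using Ztc[OF u] .
    have pu: "proj Z u \<in> R" unfolding R_def using u by blast
    have puc: "proj Z u \<in> carrier_vec n" using proj_carrier[OF Zs uc] .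
    have "z2 \<bullet>c u = cnj (u \<bullet>c z2)" using cip_cnj[OF uc z2c] by simp
    also have "u \<bullet>c z2 = proj Z u \<bullet>c z2" using proj_cip[OF Zs uc z2Z] .
    also have "cnj (proj Z u \<bullet>c z2) = z2 \<bullet>c proj Z u" using cip_cnj[OF puc z2c] .
    also have "z2 \<bullet>c proj Z u = 0" unfolding z2_def pr_def using proj_orth[OF Rs zc pu] .
    finally show "z2 \<bullet>c u = 0" .
  qed
  hence "z2 = 0\<^sub>v n" using claimC[OF _ z2Z] d by simp
  hence "z = pr" unfolding z2_def using zc prc by (metis vec_minus_add_cancel left_zero_vec)
  hence "z \<in> R" using prR by simp
  then obtain u0 where u0: "u0 \<in> Zt" and zu0: "z = proj Z u0" unfolding R_def by blast
  have u0c: "u0 \<in> carrier_vec n" using Ztc[OF u0] .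
  define t where "t = proj Zt z"
  have tc: "t \<in> carrier_vec n" unfolding t_def using proj_carrier[OF Zts zc] .
  have "t \<bullet>c u0 = z \<bullet>c u0" unfolding t_def using proj_cip[OF Zts zc u0] by simp
  also have "z \<bullet>c u0 = cnj (u0 \<bullet>c z)" using cip_cnj[OF u0c zc] by simp
  also have "u0 \<bullet>c z = proj Z u0 \<bullet>c z" using proj_cip[OF Zs u0c z] .
  also have "proj Z u0 \<bullet>c z = 1" using zu0 cip_self[OF zc] nz by simp
  finally have tu: "t \<bullet>c u0 = 1" by simp
  have "1 \<le> nsq t * nsq u0" using cauchy_schwarz[OF tc u0c] tu by simp
  moreover have "(1 - 2*\<delta>) * nsq u0 \<le> 1" using dir1[OF u0] zu0 nz by simp
  moreover have "0 \<le> nsq t" using nsq_nonneg[OF tc] .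
  moreover have "0 \<le> 1 - 2*\<delta>" using d by simp
  ultimately have "(1 - 2*\<delta>) * 1 \<le> nsq t"
  proof -
    assume a1: "1 \<le> nsq t * nsq u0" and a2: "(1 - 2*\<delta>) * nsq u0 \<le> 1" and a3: "0 \<le> nsq t"
      and a4: "0 \<le> 1 - 2*\<delta>"
    have "(1 - 2*\<delta>) * 1 \<le> (1 - 2*\<delta>) * (nsq t * nsq u0)" using a1 a4 by (rule mult_left_mono)
    also have "\<dots> = nsq t * ((1 - 2*\<delta>) * nsq u0)" by (simp add: algebra_simps)
    also have "\<dots> \<le> nsq t * 1" using a2 a3 by (rule mult_left_mono)
    finally show ?thesis by simp
  qed
  thus ?thesis unfolding t_def by simp
qed

lemma main: "close (2*\<delta>) Zt Z"
  unfolding close_def viable_def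
proof (intro conjI ballI impI)
  fix z assume z: "z \<in> Z" and vz: "vnorm z = 1"
  have zc: "z \<in> carrier_vec n" using Zc[OF z] .
  show "1 - 2*\<delta> \<le> (vnorm (proj Zt z))\<^sup>2"
  proof (cases "\<delta> < 1/2")
    case True
    have "nsq z = 1" using vnorm_sq[OF zc] vz by simp
    thus ?thesis using dir2[OF True z] vnorm_sq[OF proj_carrier[OF Zt_subspace zc]] by simp
  next
    case False thus ?thesis using zero_le_power2[of "vnorm (proj Zt z)"] by linarith
  qed
next
  fix u assume u: "u \<in> Zt" and vu: "vnorm u = 1"
  have uc: "u \<in> carrier_vec n" using Zt_Y Yc u by blast
  have "nsq u = 1" using vnorm_sq[OF uc] vu by simp
  thus "1 - 2*\<delta> \<le> (vnorm (proj Z u))\<^sup>2" using dir1[OF u] vnorm_sq[OF proj_carrier[OF Zs uc]] by simp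
qed

end

theorem lemma3p4:
  fixes n :: nat and Z Y :: "complex vec set" and A :: "complex mat"
    and \<Delta> \<delta> :: real
  assumes "is_subspace n Z"
    and "AGSP n \<Delta> Z A"
    and "\<Delta> \<le> 1/2"
    and "\<delta> > 0"
    and "is_subspace n Y"
    and "viable \<delta> Y Z"
  shows "close (2 * \<delta>) (spectral_subspace n Y (1\<^sub>m n - mat_adjoint A * A) 0 \<delta>) Z"
proof -
  interpret setting n Z Y A \<Delta> \<delta> using assms by unfold_locales
  show ?thesis by (rule main)
qed


end
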